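(* The Hopf monoid of hypergraphs $\mathbf{k}\mathbf{HG}$ is free commutative, free cocommutative, and self-dual.
   Context: $\mathbf{k}$ is a field of characteristic $0$. A hypergraph on a finite vertex set $I$ is $\mathcal{G}=(I,E)$ with $E$ a set of subsets of $I$ of size at least $2$. $\mathbf{k}\mathbf{HG}[I]$ is the vector space with basis the hypergraphs on $I$; relabelling acts by bijections of vertices. Multiplication: $m_{S,T}(\mathcal{G}_1,\mathcal{G}_2)=(S\sqcup T,E(\mathcal{G}_1)\cup E(\mathcal{G}_2))$; comultiplication $\Delta_{S,T}(\mathcal{G})=\mathcal{G}|S\otimes\mathcal{G}|T$ with $\mathcal{G}|S=(S,\{U\in E(\mathcal{G}):U\subseteq S\})$. For a set species $\mathbf{q}$ with $\mathbf{q}[\emptyset]=\emptyset$, $\mathcal{S}(\mathbf{q})[I]$ has basis the pairs $(A,\{x_i\})$ with $A$ an unordered set partition of $I$ into nonempty blocks $A_i$ and $x_i\in\mathbf{q}[A_i]$; the free commutative monoid structure is union of such data; the free cocommutative comonoid structure sends $(A,\{x_i\})$ to $(A|_S,\{x_i\}_{A_i\subseteq S})\otimes(A|_T,\{x_i\}_{A_i\subseteq T})$ if $S$ is a union of blocks of $A$, and to $0$ otherwise. A vector space monoid (resp. comonoid) is free commutative (resp. free cocommutative) if it is isomorphic as a monoid (resp. comonoid) to some $\mathcal{S}(\mathbf{q})$. A vector space Hopf monoid is self-dual if there is an isomorphism of species from it to its linear dual (components $\mathbf{k}\mathbf{HG}[I]^*$, with dual operations $\Delta^*$ as product and $m^*$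 as coproduct) that is simultaneously a monoid and a comonoid isomorphism. *)

theory Defs
  imports Main "HOL-Library.Disjoint_Sets"
begin

text \<open>
  Species are evaluated on finite subsets I of nat (a skeleton of the
  category of finite sets and bijections).  A linear species with a chosen basis is
  given by a basis set  B I  for each finite I; vectors of the component at I are the
  functions  'b \<Rightarrow> 'k  supported in  B I  (all bases here are finite).  The tensor
  product of two components is represented by functions on pairs of basis elements.
\<close>

definition vecs :: "(nat set \<Rightarrow> 'b set) \<Rightarrow> nat set \<Rightarrow> ('b \<Rightarrow> 'k::zero) set" where
  "vecs B I = {f. \<forall>b. f b \<noteq> 0 \<longrightarrow> b \<in> B I}"

definition delta :: "'b \<Rightarrow> 'b \<Rightarrow> 'k::{zero,one}" where
  "delta b = (\<lambda>x. if x = b then 1 else 0)"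

definition lin_relabel ::
  "(nat set \<Rightarrow> 'b set) \<Rightarrow> ((nat \<Rightarrow> nat) \<Rightarrow> 'b \<Rightarrow> 'b) \<Rightarrow> (nat \<Rightarrow> nat) \<Rightarrow> nat set
     \<Rightarrow> ('b \<Rightarrow> 'k::comm_ring_1) \<Rightarrow> ('b \<Rightarrow> 'k)" where
  "lin_relabel B rl \<sigma> I f = (\<lambda>c. \<Sum>b\<in>B I. if rl \<sigma> b = c then f b else 0)"

definition lin_mult ::
  "(nat set \<Rightarrow> 'b set) \<Rightarrow> ('b \<Rightarrow> 'b \<Rightarrow> 'b) \<Rightarrow> nat set \<Rightarrow> nat set
     \<Rightarrow> ('b \<Rightarrow> 'k::comm_ring_1) \<Rightarrow> ('b \<Rightarrow> 'k) \<Rightarrow> ('b \<Rightarrow> 'k)" where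
  "lin_mult B mb S T f g =
     (\<lambda>c. \<Sum>b1\<in>B S. \<Sum>b2\<in>B T. if mb b1 b2 = c then f b1 * g b2 else 0)"

text \<open>Linear extension of a coproduct sending a basis element either to a pure tensor
  of basis elements (Some) or to 0 (None), Delta_{S,T}.\<close>
definition lin_comult ::
  "(nat set \<Rightarrow> 'b set) \<Rightarrow> (nat set \<Rightarrow> nat set \<Rightarrow> 'b \<Rightarrow> ('b \<times> 'b) option) \<Rightarrow> nat set \<Rightarrow> nat set
     \<Rightarrow> ('b \<Rightarrow> 'k::comm_ring_1) \<Rightarrow> ('b \<times> 'b \<Rightarrow> 'k)" where
  "lin_comult B db S T h =
     (\<lambda>p. \<Sum>b\<in>B (S \<union> T). if db S T b = Some p then h b else 0)"

text \<open>Linear dual, in coordinates w.r.t. the dual basis: the product is the transpose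
  of the coproduct and the coproduct is the transpose of the product.\<close>
definition dual_mult ::
  "(nat set \<Rightarrow> 'b set) \<Rightarrow> (nat set \<Rightarrow> nat set \<Rightarrow> ('b \<Rightarrow> 'k) \<Rightarrow> ('b \<times> 'b \<Rightarrow> 'k))
     \<Rightarrow> nat set \<Rightarrow> nat set \<Rightarrow> ('b \<Rightarrow> 'k::comm_ring_1) \<Rightarrow> ('b \<Rightarrow> 'k) \<Rightarrow> ('b \<Rightarrow> 'k)" where
  "dual_mult B cm S T \<phi> \<psi> =
     (\<lambda>b. \<Sum>b1\<in>B S. \<Sum>b2\<in>B T. \<phi> b1 * \<psi> b2 * cm S T (delta b) (b1, b2))"

definition dual_comult ::
  "(nat set \<Rightarrow> 'b set) \<Rightarrow> (nat set \<Rightarrow> nat set \<Rightarrow> ('b \<Rightarrow> 'k) \<Rightarrow> ('b \<Rightarrow> 'k) \<Rightarrow> ('b \<Rightarrow> 'k))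
     \<Rightarrow> nat set \<Rightarrow> nat set \<Rightarrow> ('b \<Rightarrow> 'k::comm_ring_1) \<Rightarrow> ('b \<times> 'b \<Rightarrow> 'k)" where
  "dual_comult B m S T \<phi> =
     (\<lambda>(b1, b2). \<Sum>b\<in>B (S \<union> T). \<phi> b * m S T (delta b1) (delta b2) b)"

definition tensor_map ::
  "(nat set \<Rightarrow> 'b set) \<Rightarrow> nat set \<Rightarrow> nat set \<Rightarrow> (('b \<Rightarrow> 'k) \<Rightarrow> ('c \<Rightarrow> 'k))
     \<Rightarrow> (('b \<Rightarrow> 'k) \<Rightarrow> ('c \<Rightarrow> 'k)) \<Rightarrow> ('b \<times> 'b \<Rightarrow> 'k::comm_ring_1) \<Rightarrow> ('c \<times> 'c \<Rightarrow> 'k)" where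
  "tensor_map B S T f g F =
     (\<lambda>(c1, c2). \<Sum>b1\<in>B S. \<Sum>b2\<in>B T. F (b1, b2) * f (delta b1) c1 * g (delta b2) c2)"

definition species_iso ::
  "(nat set \<Rightarrow> 'b set) \<Rightarrow> ((nat \<Rightarrow> nat) \<Rightarrow> 'b \<Rightarrow> 'b) \<Rightarrow>
   (nat set \<Rightarrow> 'c set) \<Rightarrow> ((nat \<Rightarrow> nat) \<Rightarrow> 'c \<Rightarrow> 'c) \<Rightarrow>
   (nat set \<Rightarrow> ('b \<Rightarrow> 'k::field) \<Rightarrow> ('c \<Rightarrow> 'k)) \<Rightarrow> bool" where
  "species_iso B1 rl1 B2 rl2 \<Phi> \<longleftrightarrow>
     (\<forall>I. finite I \<longrightarrow>
        bij_betw (\<Phi> I) (vecs B1 I) (vecs B2 I) \<and>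
        (\<forall>f\<in>vecs B1 I. \<forall>g\<in>vecs B1 I. \<forall>a. \<Phi> I (\<lambda>b. a * f b + g b) = (\<lambda>c. a * \<Phi> I f c + \<Phi> I g c))) \<and>
     (\<forall>I J \<sigma>. finite I \<and> bij_betw \<sigma> I J \<longrightarrow>
        (\<forall>f\<in>vecs B1 I. \<Phi> J (lin_relabel B1 rl1 \<sigma> I f) = lin_relabel B2 rl2 \<sigma> I (\<Phi> I f)))"

definition monoid_compat ::
  "(nat set \<Rightarrow> 'b set) \<Rightarrow> (nat set \<Rightarrow> nat set \<Rightarrow> ('b \<Rightarrow> 'k) \<Rightarrow> ('b \<Rightarrow> 'k) \<Rightarrow> ('b \<Rightarrow> 'k)) \<Rightarrow>
   (nat set \<Rightarrow> nat set \<Rightarrow> ('c \<Rightarrow> 'k) \<Rightarrow> ('c \<Rightarrow> 'k) \<Rightarrow> ('c \<Rightarrow> 'k)) \<Rightarrow>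
   (nat set \<Rightarrow> ('b \<Rightarrow> 'k::field) \<Rightarrow> ('c \<Rightarrow> 'k)) \<Rightarrow> bool" where
  "monoid_compat B1 m1 m2 \<Phi> \<longleftrightarrow>
     (\<forall>S T. finite S \<and> finite T \<and> S \<inter> T = {} \<longrightarrow>
        (\<forall>f\<in>vecs B1 S. \<forall>g\<in>vecs B1 T. \<Phi> (S \<union> T) (m1 S T f g) = m2 S T (\<Phi> S f) (\<Phi> T g)))"

definition comonoid_compat ::
  "(nat set \<Rightarrow> 'b set) \<Rightarrow> (nat set \<Rightarrow> nat set \<Rightarrow> ('b \<Rightarrow> 'k) \<Rightarrow> ('b \<times> 'b \<Rightarrow> 'k)) \<Rightarrow>
   (nat set \<Rightarrow> nat set \<Rightarrow> ('c \<Rightarrow> 'k) \<Rightarrow> ('c \<times> 'c \<Rightarrow> 'k)) \<Rightarrow>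
   (nat set \<Rightarrow> ('b \<Rightarrow> 'k::field) \<Rightarrow> ('c \<Rightarrow> 'k)) \<Rightarrow> bool" where
  "comonoid_compat B1 d1 d2 \<Phi> \<longleftrightarrow>
     (\<forall>S T. finite S \<and> finite T \<and> S \<inter> T = {} \<longrightarrow>
        (\<forall>h\<in>vecs B1 (S \<union> T).
           d2 S T (\<Phi> (S \<union> T) h) = tensor_map B1 S T (\<Phi> S) (\<Phi> T) (d1 S T h)))"

text \<open>A hypergraph on I is identified with its edge set E (the vertex set being I).\<close>
definition hg :: "nat set \<Rightarrow> nat set set set" where
  "hg I = {E. \<forall>U\<in>E. U \<subseteq> I \<and> 2 \<le> card U}"

definition hg_restrict :: "nat set set \<Rightarrow> nat set \<Rightarrow> nat set set" where
  "hg_restrict E S = {U\<in>E. U \<subseteq> S}"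

definition hg_relabel :: "(nat \<Rightarrow> nat) \<Rightarrow> nat set set \<Rightarrow> nat set set" where
  "hg_relabel \<sigma> E = (\<lambda>U. \<sigma> ` U) ` E"

definition hg_mult :: "nat set \<Rightarrow> nat set \<Rightarrow> (nat set set \<Rightarrow> 'k) \<Rightarrow> (nat set set \<Rightarrow> 'k)
     \<Rightarrow> (nat set set \<Rightarrow> 'k::comm_ring_1)" where
  "hg_mult = lin_mult hg (\<union>)"

definition hg_comult :: "nat set \<Rightarrow> nat set \<Rightarrow> (nat set set \<Rightarrow> 'k)
     \<Rightarrow> (nat set set \<times> nat set set \<Rightarrow> 'k::comm_ring_1)" where
  "hg_comult = lin_comult hg (\<lambda>S T E. Some (hg_restrict E S, hg_restrict E T))"

definition set_species :: "(nat set \<Rightarrow> 'x set) \<Rightarrow> ((nat \<Rightarrow> nat) \<Rightarrow> nat set \<Rightarrow> 'x \<Rightarrow> 'x) \<Rightarrow> bool" where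
  "set_species qset qmap \<longleftrightarrow>
     (\<forall>A B \<sigma>. finite A \<and> bij_betw \<sigma> A B \<longrightarrow> qmap \<sigma> A ` qset A \<subseteq> qset B) \<and>
     (\<forall>A. finite A \<longrightarrow> (\<forall>x\<in>qset A. qmap id A x = x)) \<and>
     (\<forall>A B C \<sigma> \<tau>. finite A \<and> bij_betw \<sigma> A B \<and> bij_betw \<tau> B C \<longrightarrow>
        (\<forall>x\<in>qset A. qmap (\<tau> \<circ> \<sigma>) A x = qmap \<tau> B (qmap \<sigma> A x))) \<and>
     (\<forall>A \<sigma> \<tau>. finite A \<and> inj_on \<sigma> A \<and> (\<forall>a\<in>A. \<sigma> a = \<tau> a) \<longrightarrow>
        (\<forall>x\<in>qset A. qmap \<sigma> A x = qmap \<tau> A x))"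

definition sq_basis :: "(nat set \<Rightarrow> 'x set) \<Rightarrow> nat set \<Rightarrow> (nat set \<times> 'x) set set" where
  "sq_basis qset I = {X. partition_on I (fst ` X) \<and>
      (\<forall>p\<in>X. \<forall>p'\<in>X. fst p = fst p' \<longrightarrow> p = p') \<and> (\<forall>(A, x)\<in>X. x \<in> qset A)}"

definition sq_relabel :: "((nat \<Rightarrow> nat) \<Rightarrow> nat set \<Rightarrow> 'x \<Rightarrow> 'x) \<Rightarrow> (nat \<Rightarrow> nat)
     \<Rightarrow> (nat set \<times> 'x) set \<Rightarrow> (nat set \<times> 'x) set" where
  "sq_relabel qmap \<sigma> X = (\<lambda>(A, x). (\<sigma> ` A, qmap \<sigma> A x)) ` X"

definition sq_mult :: "(nat set \<Rightarrow> 'x set) \<Rightarrow> nat set \<Rightarrow> nat set \<Rightarrow> ((nat set \<times> 'x) set \<Rightarrow> 'k)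
     \<Rightarrow> ((nat set \<times> 'x) set \<Rightarrow> 'k) \<Rightarrow> ((nat set \<times> 'x) set \<Rightarrow> 'k::comm_ring_1)" where
  "sq_mult qset = lin_mult (sq_basis qset) (\<union>)"

definition sq_comult :: "(nat set \<Rightarrow> 'x set) \<Rightarrow> nat set \<Rightarrow> nat set \<Rightarrow> ((nat set \<times> 'x) set \<Rightarrow> 'k)
     \<Rightarrow> ((nat set \<times> 'x) set \<times> (nat set \<times> 'x) set \<Rightarrow> 'k::comm_ring_1)" where
  "sq_comult qset = lin_comult (sq_basis qset)
     (\<lambda>S T X. if S = \<Union> {A\<in>fst ` X. A \<subseteq> S}
              then Some ({p\<in>X. fst p \<subseteq> S}, {p\<in>X. fst p \<subseteq> T}) else None)"

definition hg_free_commutative :: "'k::field itself \<Rightarrow> bool" where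
  "hg_free_commutative _ \<longleftrightarrow>
     (\<exists>(qset :: nat set \<Rightarrow> nat set) qmap (\<Phi> :: nat set \<Rightarrow> (nat set set \<Rightarrow> 'k) \<Rightarrow> _).
        set_species qset qmap \<and> qset {} = {} \<and>
        species_iso hg hg_relabel (sq_basis qset) (sq_relabel qmap) \<Phi> \<and>
        monoid_compat hg hg_mult (sq_mult qset) \<Phi>)"

definition hg_free_cocommutative :: "'k::field itself \<Rightarrow> bool" where
  "hg_free_cocommutative _ \<longleftrightarrow>
     (\<exists>(qset :: nat set \<Rightarrow> nat set) qmap (\<Phi> :: nat set \<Rightarrow> (nat set set \<Rightarrow> 'k) \<Rightarrow> _).
        set_species qset qmap \<and> qset {} = {} \<and>
        species_iso hg hg_relabel (sq_basis qset) (sq_relabel qmap) \<Phi> \<and>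
        comonoid_compat hg hg_comult (sq_comult qset) \<Phi>)"

definition hg_self_dual :: "'k::field itself \<Rightarrow> bool" where
  "hg_self_dual _ \<longleftrightarrow>
     (\<exists>\<Phi> :: nat set \<Rightarrow> (nat set set \<Rightarrow> 'k) \<Rightarrow> (nat set set \<Rightarrow> 'k).
        species_iso hg hg_relabel hg hg_relabel \<Phi> \<and>
        monoid_compat hg hg_mult (dual_mult hg hg_comult) \<Phi> \<and>
        comonoid_compat hg hg_comult (dual_comult hg hg_mult) \<Phi>)"

end

theory Submission
  imports Defs "HOL-Library.Nat_Bijection"
begin


lemma alt_sum_Pow:
  assumes "finite A"
  shows "(\<Sum>W\<in>Pow A. (-1::'k::comm_ring_1) ^ card W) = (if A = {} then 1 else 0)"
  using assms
proof (induction A rule: finite_induct)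
  case empty then show ?case by simp
next
  case (insert a A)
  have d: "Pow A \<inter> insert a ` Pow A = {}" using insert.hyps by auto
  have inj: "inj_on (insert a) (Pow A)"
  proof (rule inj_onI)
    fix X Y assume "X \<in> Pow A" "Y \<in> Pow A" "insert a X = insert a Y"
    then have "insert a X - {a} = insert a Y - {a}" by simp
    then show "X = Y" using \<open>X \<in> Pow A\<close> \<open>Y \<in> Pow A\<close> insert.hyps(2) by blast
  qed
  have "(\<Sum>W\<in>Pow (insert a A). (-1::'k) ^ card W)
        = (\<Sum>W\<in>Pow A. (-1::'k) ^ card W) + (\<Sum>W\<in>insert a ` Pow A. (-1::'k) ^ card W)"
    unfolding Pow_insert using insert.hyps d by (simp add: sum.union_disjoint)
  also have "(\<Sum>W\<in>insert a ` Pow A. (-1::'k) ^ card W) = (\<Sum>W\<in>Pow A. (-1::'k) ^ card (insert a W))"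
    using inj by (simp add: sum.reindex)
  also have "\<dots> = (\<Sum>W\<in>Pow A. - ((-1::'k) ^ card W))"
    apply (rule sum.cong, rule refl)
    using insert.hyps by (subst card_insert_disjoint) (auto intro: finite_subset)
  finally show ?case by (simp add: sum_negf)
qed

lemma key_inv:
  fixes U G K :: "'a set"
  assumes U: "finite U" and G: "G \<subseteq> U" and K: "K \<subseteq> U"
  shows "(\<Sum>H\<in>Pow U. (if G \<inter> H = {} then 1 else 0) *
            (if H \<union> K = U then (-1::'k::comm_ring_1) ^ card (H \<inter> K) else 0))
         = (if G = K then 1 else 0)"
proof -
  let ?P = "\<lambda>H. G \<inter> H = {} \<and> H \<union> K = U"
  have "(\<Sum>H\<in>Pow U. (if G \<inter> H = {} then 1 else 0) *
            (if H \<union> K = U then (-1::'k) ^ card (H \<inter> K) else 0))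
       = (\<Sum>H\<in>Pow U. if ?P H then (-1::'k) ^ card (H \<inter> K) else 0)"
    by (rule sum.cong) auto
  also have "\<dots> = (\<Sum>H\<in>{H\<in>Pow U. ?P H}. (-1::'k) ^ card (H \<inter> K))"
    using U by (simp only: sum.inter_filter finite_Pow_iff)
  also have "\<dots> = (if G = K then 1 else 0)"
  proof (cases "G \<subseteq> K")
    case False
    have e: "{H\<in>Pow U. ?P H} = {}" using G False by blast
    have "G \<noteq> K" using False by auto
    then show ?thesis unfolding e by simp
  next
    case True
    have eq: "{H\<in>Pow U. ?P H} = (\<lambda>W. (U - K) \<union> W) ` Pow (K - G)"
    proof
      show "{H\<in>Pow U. ?P H} \<subseteq> (\<lambda>W. (U - K) \<union> W) ` Pow (K - G)"
      proof
        fix H assume "H \<in> {H\<in>Pow U. ?P H}"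
        then have H: "H \<subseteq> U" "G \<inter> H = {}" "H \<union> K = U" by auto
        show "H \<in> (\<lambda>W. (U - K) \<union> W) ` Pow (K - G)"
        proof
          show "H = (U - K) \<union> (H \<inter> K)" using H by blast
          show "H \<inter> K \<in> Pow (K - G)" using H by blast
        qed
      qed
      show "(\<lambda>W. (U - K) \<union> W) ` Pow (K - G) \<subseteq> {H\<in>Pow U. ?P H}"
      proof
        fix H assume "H \<in> (\<lambda>W. (U - K) \<union> W) ` Pow (K - G)"
        then obtain W where W: "W \<subseteq> K - G" "H = (U - K) \<union> W" by auto
        have "H \<subseteq> U" using W K by auto
        moreover have "G \<inter> H = {}" using W True by auto
        moreover have "H \<union> K = U" using W K by auto
        ultimately show "H \<in> {H\<in>Pow U. ?P H}" by simp
      qed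
    qed
    have inj: "inj_on (\<lambda>W. (U - K) \<union> W) (Pow (K - G))"
    proof (rule inj_onI)
      fix X Y assume "X \<in> Pow (K - G)" "Y \<in> Pow (K - G)" "(U - K) \<union> X = (U - K) \<union> Y"
      then have "((U - K) \<union> X) \<inter> K = ((U - K) \<union> Y) \<inter> K" by simp
      then show "X = Y" using \<open>X \<in> Pow (K - G)\<close> \<open>Y \<in> Pow (K - G)\<close> by blast
    qed
    have "(\<Sum>H\<in>{H\<in>Pow U. ?P H}. (-1::'k) ^ card (H \<inter> K))
        = (\<Sum>W\<in>Pow (K - G). (-1::'k) ^ card (((U - K) \<union> W) \<inter> K))"
      unfolding eq using inj by (simp add: sum.reindex)
    also have "\<dots> = (\<Sum>W\<in>Pow (K - G). (-1::'k) ^ card W)"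
    proof (rule sum.cong)
      fix W assume "W \<in> Pow (K - G)"
      then have "((U - K) \<union> W) \<inter> K = W" by blast
      then show "(-1::'k) ^ card (((U - K) \<union> W) \<inter> K) = (-1) ^ card W" by simp
    qed simp
    also have "\<dots> = (if K - G = {} then 1 else 0)"
      using U K by (intro alt_sum_Pow) (auto intro: finite_subset)
    finally show ?thesis using True by auto
  qed
  finally show ?thesis .
qed

lemma vecs_zero: "f \<in> vecs B I \<Longrightarrow> b \<notin> B I \<Longrightarrow> f b = 0"
  unfolding vecs_def by auto

lemma vecsI: "(\<And>b. b \<notin> B I \<Longrightarrow> f b = 0) \<Longrightarrow> f \<in> vecs B I"
  unfolding vecs_def by auto

lemma delta_vecs: "b \<in> B I \<Longrightarrow> (delta b :: 'b \<Rightarrow> 'k::{zero,one}) \<in> vecs B I"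
  unfolding vecs_def delta_def by auto

lemma sum_if_eq_bij:
  assumes A: "finite A" and g: "bij_betw g A C"
  shows "(\<Sum>b\<in>A. if g b = c then f b else (0::'k::comm_monoid_add))
         = (if c \<in> C then f (inv_into A g c) else 0)"
proof (cases "c \<in> C")
  case True
  let ?b = "inv_into A g c"
  have b: "?b \<in> A" "g ?b = c"
    using True g by (auto simp: bij_betw_def intro: inv_into_into f_inv_into_f)
  have "(\<Sum>b\<in>A. if g b = c then f b else 0) = (\<Sum>b\<in>A. if b = ?b then f b else 0)"
  proof (rule sum.cong)
    fix b assume "b \<in> A"
    then have "g b = c \<longleftrightarrow> b = ?b" using b g by (auto simp: bij_betw_def inj_on_def)
    then show "(if g b = c then f b else 0) = (if b = ?b then f b else 0)" by simp
  qed simp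
  also have "\<dots> = f ?b" using A b by (simp add: sum.delta)
  finally show ?thesis using True by simp
next
  case False
  have "\<And>b. b \<in> A \<Longrightarrow> g b \<noteq> c" using False g by (auto simp: bij_betw_def)
  then show ?thesis using False by simp
qed

lemma sum_push_comp:
  assumes "finite A" "finite C" "\<And>b. b \<in> A \<Longrightarrow> \<beta> b \<in> C"
  shows "(\<Sum>x\<in>C. if \<gamma> x = c then (\<Sum>b\<in>A. if \<beta> b = x then f b else 0) else (0::'k::comm_monoid_add))
       = (\<Sum>b\<in>A. if \<gamma> (\<beta> b) = c then f b else 0)"
proof -
  have "(\<Sum>x\<in>C. if \<gamma> x = c then (\<Sum>b\<in>A. if \<beta> b = x then f b else 0) else 0)
      = (\<Sum>x\<in>C. \<Sum>b\<in>A. if \<beta> b = x then (if \<gamma> x = c then f b else 0) else 0)"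
    by (rule sum.cong) (auto intro!: sum.cong sum.neutral)
  also have "\<dots> = (\<Sum>b\<in>A. \<Sum>x\<in>C. if \<beta> b = x then (if \<gamma> x = c then f b else 0) else 0)"
    by (rule sum.swap)
  also have "\<dots> = (\<Sum>b\<in>A. if \<gamma> (\<beta> b) = c then f b else 0)"
    using assms by (intro sum.cong) (simp_all add: sum.delta)
  finally show ?thesis .
qed

definition push :: "(nat set \<Rightarrow> 'b set) \<Rightarrow> (nat set \<Rightarrow> 'b \<Rightarrow> 'c) \<Rightarrow> nat set
    \<Rightarrow> ('b \<Rightarrow> 'k::comm_ring_1) \<Rightarrow> ('c \<Rightarrow> 'k)" where
  "push B \<beta> I f = (\<lambda>c. \<Sum>b\<in>B I. if \<beta> I b = c then f b else 0)"

lemma lin_relabel_push: "lin_relabel B rl \<sigma> I f = push B (\<lambda>_. rl \<sigma>) I f"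
  by (simp add: lin_relabel_def push_def)

lemma push_bij:
  assumes "finite (BB I)" "bij_betw (\<beta> I) (BB I) (CC I)"
  shows "push BB \<beta> I f c = (if c \<in> CC I then f (inv_into (BB I) (\<beta> I) c) else 0)"
  unfolding push_def by (rule sum_if_eq_bij[OF assms])

lemma push_linear:
  fixes f g :: "'b \<Rightarrow> 'k::comm_ring_1"
  shows "push B \<beta> I (\<lambda>b. a * f b + g b) = (\<lambda>c. a * push B \<beta> I f c + push B \<beta> I g c)"
proof
  fix c
  have "push B \<beta> I (\<lambda>b. a * f b + g b) c
      = (\<Sum>b\<in>B I. a * (if \<beta> I b = c then f b else 0) + (if \<beta> I b = c then g b else 0))"
    unfolding push_def by (rule sum.cong) auto
  also have "\<dots> = a * push B \<beta> I f c + push B \<beta> I g c"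
    unfolding push_def by (simp add: sum.distrib sum_distrib_left)
  finally show "push B \<beta> I (\<lambda>b. a * f b + g b) c = a * push B \<beta> I f c + push B \<beta> I g c" .
qed

lemma species_iso_push:
  fixes B1 :: "nat set \<Rightarrow> 'b set" and B2 :: "nat set \<Rightarrow> 'c set"
  assumes fin: "\<And>I. finite I \<Longrightarrow> finite (B1 I)"
  and bij: "\<And>I. finite I \<Longrightarrow> bij_betw (\<beta> I) (B1 I) (B2 I)"
  and rl1: "\<And>I J \<sigma> b. finite I \<Longrightarrow> bij_betw \<sigma> I J \<Longrightarrow> b \<in> B1 I \<Longrightarrow> rl1 \<sigma> b \<in> B1 J"
  and nat: "\<And>I J \<sigma> b. finite I \<Longrightarrow> bij_betw \<sigma> I J \<Longrightarrow> b \<in> B1 I \<Longrightarrow> \<beta> J (rl1 \<sigma> b) = rl2 \<sigma> (\<beta> I b)"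
  shows "species_iso B1 rl1 B2 rl2 (push B1 \<beta> :: _ \<Rightarrow> _ \<Rightarrow> _ \<Rightarrow> 'k::field)"
  unfolding species_iso_def
proof (intro conjI allI impI ballI)
  fix I :: "nat set" assume I: "finite I"
  note pb = push_bij[where BB=B1 and \<beta>=\<beta> and CC=B2 and I=I, OF fin[OF I] bij[OF I]]
  have fin2: "finite (B2 I)" using bij[OF I] fin[OF I] bij_betw_finite by blast
  let ?inv = "\<lambda>(g :: 'c \<Rightarrow> 'k) b. if b \<in> B1 I then g (\<beta> I b) else 0"
  show "bij_betw (push B1 \<beta> I) (vecs B1 I) (vecs B2 I :: ('c \<Rightarrow> 'k) set)"
  proof (rule bij_betw_byWitness[where f'="?inv"])
    show "\<forall>f\<in>vecs B1 I. ?inv (push B1 \<beta> I f) = f"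
    proof
      fix f :: "'b \<Rightarrow> 'k" assume f: "f \<in> vecs B1 I"
      show "?inv (push B1 \<beta> I f) = f"
      proof
        fix b show "?inv (push B1 \<beta> I f) b = f b"
        proof (cases "b \<in> B1 I")
          case True
          then have "\<beta> I b \<in> B2 I" using bij[OF I] by (auto simp: bij_betw_def)
          moreover have "inv_into (B1 I) (\<beta> I) (\<beta> I b) = b"
            using True bij[OF I] bij_betw_inv_into_left by metis
          ultimately show ?thesis using True pb[of f "\<beta> I b"] by simp
        next
          case False then show ?thesis using f vecs_zero by fastforce
        qed
      qed
    qed
    show "\<forall>g\<in>vecs B2 I. push B1 \<beta> I (?inv g) = g"
    proof
      fix g :: "'c \<Rightarrow> 'k" assume g: "g \<in> vecs B2 I"
      show "push B1 \<beta> I (?inv g) = g"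
      proof
        fix c show "push B1 \<beta> I (?inv g) c = g c"
        proof (cases "c \<in> B2 I")
          case True
          have "inv_into (B1 I) (\<beta> I) c \<in> B1 I" "\<beta> I (inv_into (B1 I) (\<beta> I) c) = c"
            using True bij[OF I] by (auto simp: bij_betw_def intro: inv_into_into f_inv_into_f)
          then show ?thesis using True pb[of "?inv g" c] by simp
        next
          case False then show ?thesis using g vecs_zero pb[of "?inv g" c] by fastforce
        qed
      qed
    qed
    show "push B1 \<beta> I ` vecs B1 I \<subseteq> vecs B2 I"
      by (intro image_subsetI vecsI) (simp only: pb if_False)
    show "?inv ` vecs B2 I \<subseteq> vecs B1 I"
      by (auto intro!: vecsI)
  qed
next
  fix I :: "nat set" and f g :: "'b \<Rightarrow> 'k" and a :: 'k
  show "push B1 \<beta> I (\<lambda>b. a * f b + g b) = (\<lambda>c. a * push B1 \<beta> I f c + push B1 \<beta> I g c)"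
    by (rule push_linear)
next
  fix I J :: "nat set" and \<sigma> :: "nat \<Rightarrow> nat" and f :: "'b \<Rightarrow> 'k"
  assume IJ: "finite I \<and> bij_betw \<sigma> I J" and f: "f \<in> vecs B1 I"
  then have I: "finite I" and s: "bij_betw \<sigma> I J" by auto
  have J: "finite J" using I s bij_betw_finite by blast
  have fin2: "finite (B2 I)" using bij[OF I] fin[OF I] bij_betw_finite by blast
  have b2: "\<And>b. b \<in> B1 I \<Longrightarrow> \<beta> I b \<in> B2 I" using bij[OF I] by (auto simp: bij_betw_def)
  show "push B1 \<beta> J (lin_relabel B1 rl1 \<sigma> I f) = lin_relabel B2 rl2 \<sigma> I (push B1 \<beta> I f)"
  proof
    fix c
    have "push B1 \<beta> J (lin_relabel B1 rl1 \<sigma> I f) c = (\<Sum>b\<in>B1 I. if \<beta> J (rl1 \<sigma> b) = c then f b else 0)"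
      unfolding push_def lin_relabel_def
      by (rule sum_push_comp) (use fin[OF I] fin[OF J] rl1[OF I s] in auto)
    also have "\<dots> = (\<Sum>b\<in>B1 I. if rl2 \<sigma> (\<beta> I b) = c then f b else 0)"
      by (rule sum.cong) (auto simp: nat[OF I s])
    also have "\<dots> = lin_relabel B2 rl2 \<sigma> I (push B1 \<beta> I f) c"
      unfolding push_def lin_relabel_def
      by (rule sum_push_comp[symmetric]) (use fin[OF I] fin2 b2 in auto)
    finally show "push B1 \<beta> J (lin_relabel B1 rl1 \<sigma> I f) c = lin_relabel B2 rl2 \<sigma> I (push B1 \<beta> I f) c" .
  qed
qed

lemma species_isoD1:
  "species_iso B1 rl1 B2 rl2 \<Phi> \<Longrightarrow> finite I \<Longrightarrow> bij_betw (\<Phi> I) (vecs B1 I) (vecs B2 I)"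
  by (simp add: species_iso_def)

lemma species_isoD2:
  "species_iso B1 rl1 B2 rl2 \<Phi> \<Longrightarrow> finite I \<Longrightarrow> f \<in> vecs B1 I \<Longrightarrow> g \<in> vecs B1 I \<Longrightarrow>
   \<Phi> I (\<lambda>b. a * f b + g b) = (\<lambda>c. a * \<Phi> I f c + \<Phi> I g c)"
  by (simp add: species_iso_def)

lemma species_isoD3:
  "species_iso B1 rl1 B2 rl2 \<Phi> \<Longrightarrow> finite I \<Longrightarrow> bij_betw \<sigma> I J \<Longrightarrow> f \<in> vecs B1 I \<Longrightarrow>
   \<Phi> J (lin_relabel B1 rl1 \<sigma> I f) = lin_relabel B2 rl2 \<sigma> I (\<Phi> I f)"
  by (simp add: species_iso_def)

lemma species_iso_comp:
  fixes \<Phi> :: "nat set \<Rightarrow> ('b \<Rightarrow> 'k::field) \<Rightarrow> ('c \<Rightarrow> 'k)" and \<Psi> :: "nat set \<Rightarrow> ('c \<Rightarrow> 'k) \<Rightarrow> ('d \<Rightarrow> 'k)"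
  assumes A: "species_iso B1 rl1 B2 rl2 \<Phi>" and B: "species_iso B2 rl2 B3 rl3 \<Psi>"
  shows "species_iso B1 rl1 B3 rl3 (\<lambda>I f. \<Psi> I (\<Phi> I f))"
  unfolding species_iso_def
proof (intro conjI allI impI ballI)
  fix I :: "nat set" assume I: "finite I"
  have a: "bij_betw (\<Phi> I) (vecs B1 I) (vecs B2 I)" by (rule species_isoD1[OF A I])
  have b: "bij_betw (\<Psi> I) (vecs B2 I) (vecs B3 I)" by (rule species_isoD1[OF B I])
  have "bij_betw (\<Psi> I \<circ> \<Phi> I) (vecs B1 I) (vecs B3 I)" using a b by (rule bij_betw_trans)
  then show "bij_betw (\<lambda>f. \<Psi> I (\<Phi> I f)) (vecs B1 I) (vecs B3 I)" by (simp add: comp_def)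
  fix f g :: "'b \<Rightarrow> 'k" and a :: 'k
  assume f: "f \<in> vecs B1 I" and g: "g \<in> vecs B1 I"
  have fg: "\<Phi> I f \<in> vecs B2 I" "\<Phi> I g \<in> vecs B2 I" using a f g by (auto simp: bij_betw_def)
  show "\<Psi> I (\<Phi> I (\<lambda>b. a * f b + g b)) = (\<lambda>c. a * \<Psi> I (\<Phi> I f) c + \<Psi> I (\<Phi> I g) c)"
    unfolding species_isoD2[OF A I f g] by (rule species_isoD2[OF B I fg])
next
  fix I J :: "nat set" and \<sigma> :: "nat \<Rightarrow> nat" and f :: "'b \<Rightarrow> 'k"
  assume IJ: "finite I \<and> bij_betw \<sigma> I J" and f: "f \<in> vecs B1 I"
  then have I: "finite I" and s: "bij_betw \<sigma> I J" by auto
  have a: "bij_betw (\<Phi> I) (vecs B1 I) (vecs B2 I)" by (rule species_isoD1[OF A I])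
  have fv: "\<Phi> I f \<in> vecs B2 I" using a f by (auto simp: bij_betw_def)
  show "\<Psi> J (\<Phi> J (lin_relabel B1 rl1 \<sigma> I f)) = lin_relabel B3 rl3 \<sigma> I (\<Psi> I (\<Phi> I f))"
    unfolding species_isoD3[OF A I s f] by (rule species_isoD3[OF B I s fv])
qed

lemma push_mult:
  fixes f g :: "'b \<Rightarrow> 'k::comm_ring_1"
  assumes fS: "finite (B1 S)" and fT: "finite (B1 T)" and fU: "finite (B1 (S \<union> T))"
  and f2S: "finite (B2 S)" and f2T: "finite (B2 T)"
  and bS: "\<And>b. b \<in> B1 S \<Longrightarrow> \<beta> S b \<in> B2 S" and bT: "\<And>b. b \<in> B1 T \<Longrightarrow> \<beta> T b \<in> B2 T"
  and m: "\<And>b1 b2. b1 \<in> B1 S \<Longrightarrow> b2 \<in> B1 T \<Longrightarrow> mb1 b1 b2 \<in> B1 (S \<union> T)"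
  and hom: "\<And>b1 b2. b1 \<in> B1 S \<Longrightarrow> b2 \<in> B1 T \<Longrightarrow> \<beta> (S \<union> T) (mb1 b1 b2) = mb2 (\<beta> S b1) (\<beta> T b2)"
  shows "push B1 \<beta> (S \<union> T) (lin_mult B1 mb1 S T f g) = lin_mult B2 mb2 S T (push B1 \<beta> S f) (push B1 \<beta> T g)"
proof
  fix c
  let ?A = "B1 S \<times> B1 T"
  let ?F = "\<lambda>(b1, b2). f b1 * g b2"
  let ?m = "\<lambda>(b1, b2). mb1 b1 b2"
  let ?b = "\<lambda>(b1, b2). (\<beta> S b1, \<beta> T b2)"
  let ?m2 = "\<lambda>(x1, x2). mb2 x1 x2"
  have finA: "finite ?A" using fS fT by simp
  have "push B1 \<beta> (S \<union> T) (lin_mult B1 mb1 S T f g) c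
      = (\<Sum>x\<in>B1 (S \<union> T). if \<beta> (S \<union> T) x = c then (\<Sum>p\<in>?A. if ?m p = x then ?F p else 0) else 0)"
    unfolding push_def lin_mult_def
    by (rule sum.cong) (auto simp: sum.cartesian_product intro!: sum.cong split: prod.splits)
  also have "\<dots> = (\<Sum>p\<in>?A. if \<beta> (S \<union> T) (?m p) = c then ?F p else 0)"
    by (rule sum_push_comp) (use finA fU m in auto)
  also have "\<dots> = (\<Sum>p\<in>?A. if ?m2 (?b p) = c then ?F p else 0)"
    by (rule sum.cong) (auto simp: hom)
  also have "\<dots> = (\<Sum>x\<in>B2 S \<times> B2 T. if ?m2 x = c then (\<Sum>p\<in>?A. if ?b p = x then ?F p else 0) else 0)"
    by (rule sum_push_comp[symmetric]) (use finA f2S f2T bS bT in auto)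
  also have "\<dots> = lin_mult B2 mb2 S T (push B1 \<beta> S f) (push B1 \<beta> T g) c"
  proof -
    have pr: "push B1 \<beta> S f x1 * push B1 \<beta> T g x2 = (\<Sum>p\<in>?A. if ?b p = (x1, x2) then ?F p else 0)" for x1 x2
      unfolding push_def sum_product sum.cartesian_product
      by (rule sum.cong) (auto split: if_splits)
    show ?thesis
      unfolding lin_mult_def sum.cartesian_product
      by (rule sum.cong) (auto simp: pr)
  qed
  finally show "push B1 \<beta> (S \<union> T) (lin_mult B1 mb1 S T f g) c = lin_mult B2 mb2 S T (push B1 \<beta> S f) (push B1 \<beta> T g) c" .
qed

definition Uof :: "nat set \<Rightarrow> nat set set" where
  "Uof I = {U. U \<subseteq> I \<and> 2 \<le> card U}"

lemma hg_Pow: "hg I = Pow (Uof I)"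
  by (auto simp: hg_def Uof_def)

lemma finite_Uof: "finite I \<Longrightarrow> finite (Uof I)"
  by (rule finite_subset[of _ "Pow I"]) (auto simp: Uof_def)

lemma finite_hg: "finite I \<Longrightarrow> finite (hg I)"
  by (simp add: hg_Pow finite_Uof)

lemma hg_edge: "E \<in> hg I \<Longrightarrow> U \<in> E \<Longrightarrow> U \<subseteq> I \<and> 2 \<le> card U"
  by (auto simp: hg_def)

lemma hg_edge_ne: "E \<in> hg I \<Longrightarrow> U \<in> E \<Longrightarrow> U \<noteq> {}"
  by (auto simp: hg_def)

lemma hg_edge_sub_Pow: "E \<in> hg I \<Longrightarrow> E \<subseteq> Pow I"
  by (auto simp: hg_def)

lemma hg_restrict_hg: "E \<in> hg I \<Longrightarrow> hg_restrict E S \<in> hg S"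
  by (auto simp: hg_def hg_restrict_def)

lemma hg_Un: "E1 \<in> hg S \<Longrightarrow> E2 \<in> hg T \<Longrightarrow> E1 \<union> E2 \<in> hg (S \<union> T)"
  by (auto simp: hg_def)

lemma hg_mono: "E \<in> hg S \<Longrightarrow> S \<subseteq> I \<Longrightarrow> E \<in> hg I"
  by (auto simp: hg_def)

lemma hg_restrict_Un1:
  "S \<inter> T = {} \<Longrightarrow> E1 \<in> hg S \<Longrightarrow> E2 \<in> hg T \<Longrightarrow> hg_restrict (E1 \<union> E2) S = E1"
  unfolding hg_restrict_def hg_def by (auto dest!: card_ge_0_finite) (metis card.empty disjoint_iff not_numeral_le_zero subset_iff subset_empty)

lemma hg_restrict_Un2:
  "S \<inter> T = {} \<Longrightarrow> E1 \<in> hg S \<Longrightarrow> E2 \<in> hg T \<Longrightarrow> hg_restrict (E1 \<union> E2) T = E2"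
  using hg_restrict_Un1[of T S E2 E1] by (simp add: Un_commute Int_commute)

lemma hg_Int_restrict: "E \<in> hg S \<Longrightarrow> E \<inter> hg_restrict c S = E \<inter> c"
  by (auto simp: hg_def hg_restrict_def)

lemma hg_comult_delta:
  assumes "finite S" "finite T"
  shows "hg_comult S T (delta H) (h1, h2)
     = (if H \<in> hg (S \<union> T) \<and> hg_restrict H S = h1 \<and> hg_restrict H T = h2 then 1 else (0::'k::comm_ring_1))"
proof -
  have "hg_comult S T (delta H) (h1, h2)
      = (\<Sum>b\<in>hg (S \<union> T). if b = H then (if hg_restrict H S = h1 \<and> hg_restrict H T = h2 then 1 else (0::'k)) else 0)"
    unfolding hg_comult_def lin_comult_def delta_def by (rule sum.cong) auto
  then show ?thesis using assms by (simp add: sum.delta' finite_hg)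
qed

lemma hg_mult_delta:
  assumes "finite S" "finite T"
  shows "hg_mult S T (delta h1) (delta h2) b
     = (if h1 \<in> hg S \<and> h2 \<in> hg T \<and> h1 \<union> h2 = b then 1 else (0::'k::comm_ring_1))"
proof -
  have "hg_mult S T (delta h1) (delta h2) b
      = (\<Sum>b1\<in>hg S. if b1 = h1 then (\<Sum>b2\<in>hg T. if b2 = h2 then (if h1 \<union> h2 = b then 1 else (0::'k)) else 0) else 0)"
    unfolding hg_mult_def lin_mult_def delta_def
  proof (rule sum.cong)
    fix b1 assume "b1 \<in> hg S"
    show "(\<Sum>b2\<in>hg T. if b1 \<union> b2 = b then (if b1 = h1 then 1 else 0) * (if b2 = h2 then 1 else 0) else 0)
       = (if b1 = h1 then (\<Sum>b2\<in>hg T. if b2 = h2 then (if h1 \<union> h2 = b then 1 else (0::'k)) else 0) else 0)"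
    proof (cases "b1 = h1")
      case True
      have "\<And>b2. (if b1 \<union> b2 = b then (if b1 = h1 then 1 else 0) * (if b2 = h2 then 1 else 0) else 0)
          = (if b2 = h2 then (if h1 \<union> h2 = b then 1 else (0::'k)) else 0)" using True by auto
      then show ?thesis using True by simp
    next
      case False then show ?thesis by (simp add: sum.neutral)
    qed
  qed simp
  then show ?thesis using assms by (simp add: sum.delta' finite_hg)
qed

lemma Uof_image:
  assumes s: "bij_betw \<sigma> I J"
  shows "image \<sigma> ` Uof I = Uof J"
proof
  show "image \<sigma> ` Uof I \<subseteq> Uof J"
  proof
    fix V assume "V \<in> image \<sigma> ` Uof I"
    then obtain U where U: "U \<subseteq> I" "2 \<le> card U" "V = \<sigma> ` U" by (auto simp: Uof_def)
    have "inj_on \<sigma> U" using s U(1) by (auto simp: bij_betw_def intro: inj_on_subset)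
    then have "card V = card U" using U(3) by (simp add: card_image)
    moreover have "V \<subseteq> J" using s U by (auto simp: bij_betw_def)
    ultimately show "V \<in> Uof J" using U by (simp add: Uof_def)
  qed
  show "Uof J \<subseteq> image \<sigma> ` Uof I"
  proof
    fix V assume V: "V \<in> Uof J"
    have "V \<in> Pow J" using V by (auto simp: Uof_def)
    moreover have "image \<sigma> ` Pow I = Pow J"
      using bij_betw_image_Pow[OF s] by (simp add: bij_betw_def)
    ultimately have "V \<in> image \<sigma> ` Pow I" by simp
    then obtain U where U: "U \<in> Pow I" "V = \<sigma> ` U" by blast
    have "inj_on \<sigma> U" using s U(1) by (auto simp: bij_betw_def intro: inj_on_subset)
    then have "card V = card U" using U(2) by (simp add: card_image)
    then have "U \<in> Uof I" using U V by (auto simp: Uof_def)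
    then show "V \<in> image \<sigma> ` Uof I" using U by auto
  qed
qed

lemma relabel_bij:
  assumes s: "bij_betw \<sigma> I J"
  shows "bij_betw (hg_relabel \<sigma>) (hg I) (hg J)"
proof -
  have sub: "Uof I \<subseteq> Pow I" by (auto simp: Uof_def)
  have "bij_betw (image \<sigma>) (Uof I) (Uof J)"
    by (rule bij_betw_subset[OF bij_betw_image_Pow[OF s] sub Uof_image[OF s]])
  then have "bij_betw (image (image \<sigma>)) (Pow (Uof I)) (Pow (Uof J))"
    by (rule bij_betw_image_Pow)
  moreover have "hg_relabel \<sigma> = image (image \<sigma>)" by (auto simp: hg_relabel_def)
  ultimately show ?thesis by (simp add: hg_Pow)
qed

lemma relabel_Int_empty:
  assumes s: "bij_betw \<sigma> I J" and b: "b \<in> hg I" and c: "c \<in> hg I"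
  shows "hg_relabel \<sigma> b \<inter> hg_relabel \<sigma> c = {} \<longleftrightarrow> b \<inter> c = {}"
proof -
  have "inj_on (image \<sigma>) (Pow I)" using s by (simp add: bij_betw_def inj_on_image_Pow)
  then have "image \<sigma> ` (b \<inter> c) = image \<sigma> ` b \<inter> image \<sigma> ` c"
    using hg_edge_sub_Pow[OF b] hg_edge_sub_Pow[OF c] by (rule inj_on_image_Int)
  then show ?thesis by (auto simp: hg_relabel_def)
qed

section \<open>Self-duality\<close>

definition sdPhi :: "nat set \<Rightarrow> (nat set set \<Rightarrow> 'k::comm_ring_1) \<Rightarrow> (nat set set \<Rightarrow> 'k)" where
  "sdPhi I f = (\<lambda>c. if c \<in> hg I then (\<Sum>b\<in>hg I. if b \<inter> c = {} then f b else 0) else 0)"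

definition sdPsi :: "nat set \<Rightarrow> (nat set set \<Rightarrow> 'k::comm_ring_1) \<Rightarrow> (nat set set \<Rightarrow> 'k)" where
  "sdPsi I g = (\<lambda>c. if c \<in> hg I then
      (\<Sum>b\<in>hg I. if b \<union> c = Uof I then (-1) ^ card (b \<inter> c) * g b else 0) else 0)"

lemma sdPhi_delta:
  assumes "finite I" "b \<in> hg I"
  shows "sdPhi I (delta b) c = (if c \<in> hg I \<and> b \<inter> c = {} then 1 else (0::'k::comm_ring_1))"
proof -
  have "(\<Sum>x\<in>hg I. if x \<inter> c = {} then delta b x else (0::'k)) = (\<Sum>x\<in>hg I. if x = b then (if b \<inter> c = {} then 1 else 0) else 0)"
    by (rule sum.cong) (auto simp: delta_def)
  then show ?thesis using assms by (simp add: sdPhi_def sum.delta finite_hg)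
qed

lemma sd_inv1:
  fixes f :: "nat set set \<Rightarrow> 'k::comm_ring_1"
  assumes I: "finite I" and f: "f \<in> vecs hg I"
  shows "sdPsi I (sdPhi I f) = f"
proof
  fix c
  show "sdPsi I (sdPhi I f) c = f c"
  proof (cases "c \<in> hg I")
    case False then show ?thesis using f vecs_zero by (fastforce simp: sdPsi_def)
  next
    case c: True
    let ?D = "\<lambda>G H. (if G \<inter> H = {} then 1 else 0) *
            (if H \<union> c = Uof I then (-1::'k) ^ card (H \<inter> c) else 0)"
    have eqH: "(if H \<union> c = Uof I then (-1) ^ card (H \<inter> c) * sdPhi I f H else 0)
          = (\<Sum>G\<in>hg I. f G * ?D G H)" if H: "H \<in> hg I" for H
      unfolding sdPhi_def using H
      by (cases "H \<union> c = Uof I") (auto simp: sum_distrib_left intro!: sum.cong)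
    have "sdPsi I (sdPhi I f) c = (\<Sum>H\<in>hg I. \<Sum>G\<in>hg I. f G * ?D G H)"
      unfolding sdPsi_def using c by (simp add: eqH cong: sum.cong)
    also have "\<dots> = (\<Sum>G\<in>hg I. f G * (\<Sum>H\<in>hg I. ?D G H))"
      by (subst sum.swap) (simp add: sum_distrib_left)
    also have "\<dots> = (\<Sum>G\<in>hg I. f G * (if G = c then 1 else 0))"
    proof (rule sum.cong[OF refl])
      fix G assume G: "G \<in> hg I"
      show "f G * (\<Sum>H\<in>hg I. ?D G H) = f G * (if G = c then 1 else 0)"
        unfolding hg_Pow
        by (subst key_inv) (use I G c finite_Uof in \<open>auto simp: hg_Pow\<close>)
    qed
    also have "\<dots> = f c" using I c by (simp add: finite_hg if_distrib sum.delta' cong: if_cong)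
    finally show ?thesis .
  qed
qed

lemma sd_inv2:
  fixes g :: "nat set set \<Rightarrow> 'k::comm_ring_1"
  assumes I: "finite I" and g: "g \<in> vecs hg I"
  shows "sdPhi I (sdPsi I g) = g"
proof
  fix c
  show "sdPhi I (sdPsi I g) c = g c"
  proof (cases "c \<in> hg I")
    case False then show ?thesis using g vecs_zero by (fastforce simp: sdPhi_def)
  next
    case c: True
    let ?D = "\<lambda>G H. (if c \<inter> H = {} then 1 else 0) *
            (if H \<union> G = Uof I then (-1::'k) ^ card (H \<inter> G) else 0)"
    have eqH: "(if H \<inter> c = {} then sdPsi I g H else 0)
          = (\<Sum>G\<in>hg I. g G * ?D G H)" if H: "H \<in> hg I" for H
      unfolding sdPsi_def using H
      by (cases "H \<inter> c = {}") (auto simp: Int_commute Un_commute intro!: sum.cong)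
    have "sdPhi I (sdPsi I g) c = (\<Sum>H\<in>hg I. \<Sum>G\<in>hg I. g G * ?D G H)"
      unfolding sdPhi_def using c by (simp add: eqH cong: sum.cong)
    also have "\<dots> = (\<Sum>G\<in>hg I. g G * (\<Sum>H\<in>hg I. ?D G H))"
      by (subst sum.swap) (simp add: sum_distrib_left)
    also have "\<dots> = (\<Sum>G\<in>hg I. g G * (if c = G then 1 else 0))"
    proof (rule sum.cong[OF refl])
      fix G assume G: "G \<in> hg I"
      show "g G * (\<Sum>H\<in>hg I. ?D G H) = g G * (if c = G then 1 else 0)"
        unfolding hg_Pow
        by (subst key_inv) (use I G c finite_Uof in \<open>auto simp: hg_Pow\<close>)
    qed
    also have "\<dots> = g c" using I c by (simp add: finite_hg if_distrib sum.delta cong: if_cong)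
    finally show ?thesis .
  qed
qed

lemma sdPhi_linear:
  fixes f g :: "nat set set \<Rightarrow> 'k::comm_ring_1"
  shows "sdPhi I (\<lambda>b. a * f b + g b) = (\<lambda>c. a * sdPhi I f c + sdPhi I g c)"
proof
  fix c
  have "(\<Sum>b\<in>hg I. if b \<inter> c = {} then a * f b + g b else 0)
      = (\<Sum>b\<in>hg I. a * (if b \<inter> c = {} then f b else 0) + (if b \<inter> c = {} then g b else 0))"
    by (rule sum.cong) auto
  then show "sdPhi I (\<lambda>b. a * f b + g b) c = a * sdPhi I f c + sdPhi I g c"
    by (simp add: sdPhi_def sum.distrib sum_distrib_left)
qed

lemma sdPhi_natural:
  fixes f :: "nat set set \<Rightarrow> 'k::comm_ring_1"
  assumes I: "finite I" and s: "bij_betw \<sigma> I J"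
  shows "sdPhi J (lin_relabel hg hg_relabel \<sigma> I f) = lin_relabel hg hg_relabel \<sigma> I (sdPhi I f)"
proof
  fix c
  have J: "finite J" using I s bij_betw_finite by blast
  have rb: "bij_betw (hg_relabel \<sigma>) (hg I) (hg J)" by (rule relabel_bij[OF s])
  have R: "lin_relabel hg hg_relabel \<sigma> I (sdPhi I f) c
      = (if c \<in> hg J then sdPhi I f (inv_into (hg I) (hg_relabel \<sigma>) c) else 0)"
    unfolding lin_relabel_def by (rule sum_if_eq_bij[OF finite_hg[OF I] rb])
  show "sdPhi J (lin_relabel hg hg_relabel \<sigma> I f) c = lin_relabel hg hg_relabel \<sigma> I (sdPhi I f) c"
  proof (cases "c \<in> hg J")
    case False then show ?thesis using R by (simp add: sdPhi_def)
  next
    case True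
    let ?c = "inv_into (hg I) (hg_relabel \<sigma>) c"
    have c'1: "?c \<in> hg I"
      using True rb by (auto simp: bij_betw_def intro: inv_into_into)
    have c'2: "hg_relabel \<sigma> ?c = c"
      using True rb by (simp add: bij_betw_def f_inv_into_f)
    note c' = c'1 c'2
    have "sdPhi J (lin_relabel hg hg_relabel \<sigma> I f) c
        = (\<Sum>x\<in>hg J. if x \<inter> c = {} then (\<Sum>b\<in>hg I. if hg_relabel \<sigma> b = x then f b else 0) else 0)"
      using True by (simp add: sdPhi_def lin_relabel_def)
    also have "\<dots> = (\<Sum>b\<in>hg I. if hg_relabel \<sigma> b \<inter> c = {} then f b else 0)"
      by (rule sum_push_comp[where \<gamma>="\<lambda>x. x \<inter> c"]) (use finite_hg I J rb in \<open>auto simp: bij_betw_def\<close>)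
    also have "\<dots> = (\<Sum>b\<in>hg I. if b \<inter> ?c = {} then f b else 0)"
    proof (rule sum.cong[OF refl])
      fix b assume b: "b \<in> hg I"
      have "hg_relabel \<sigma> b \<inter> c = {} \<longleftrightarrow> b \<inter> ?c = {}"
        using relabel_Int_empty[OF s b c'(1)] c'(2) by simp
      then show "(if hg_relabel \<sigma> b \<inter> c = {} then f b else 0) = (if b \<inter> ?c = {} then f b else 0)" by simp
    qed
    also have "\<dots> = lin_relabel hg hg_relabel \<sigma> I (sdPhi I f) c"
      using R True c' by (simp add: sdPhi_def)
    finally show ?thesis .
  qed
qed

lemma sdPhi_vecs: "sdPhi I f \<in> vecs hg I"
  by (rule vecsI) (simp add: sdPhi_def)

lemma sdPsi_vecs: "sdPsi I f \<in> vecs hg I"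
  by (rule vecsI) (simp add: sdPsi_def)

lemma species_iso_sd:
  "species_iso hg hg_relabel hg hg_relabel (sdPhi :: nat set \<Rightarrow> (nat set set \<Rightarrow> 'k::field) \<Rightarrow> _)"
  unfolding species_iso_def
proof (intro conjI allI impI ballI)
  fix I :: "nat set" assume I: "finite I"
  show "bij_betw (sdPhi I) (vecs hg I) (vecs hg I :: (nat set set \<Rightarrow> 'k) set)"
    by (rule bij_betw_byWitness[where f'="sdPsi I"])
       (auto simp: sd_inv1[OF I] sd_inv2[OF I] sdPhi_vecs sdPsi_vecs)
next
  fix I and f g :: "nat set set \<Rightarrow> 'k" and a
  show "sdPhi I (\<lambda>b. a * f b + g b) = (\<lambda>c. a * sdPhi I f c + sdPhi I g c)"
    by (rule sdPhi_linear)
next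
  fix I J :: "nat set" and \<sigma> :: "nat \<Rightarrow> nat" and f :: "nat set set \<Rightarrow> 'k"
  assume "finite I \<and> bij_betw \<sigma> I J"
  then show "sdPhi J (lin_relabel hg hg_relabel \<sigma> I f) = lin_relabel hg hg_relabel \<sigma> I (sdPhi I f)"
    by (intro sdPhi_natural) auto
qed

lemma sd_monoid:
  "monoid_compat hg hg_mult (dual_mult hg hg_comult) (sdPhi :: nat set \<Rightarrow> (nat set set \<Rightarrow> 'k::field) \<Rightarrow> _)"
  unfolding monoid_compat_def
proof (intro allI impI ballI ext)
  fix S T :: "nat set" and f g :: "nat set set \<Rightarrow> 'k" and c :: "nat set set"
  assume ST: "finite S \<and> finite T \<and> S \<inter> T = {}" and f: "f \<in> vecs hg S" and g: "g \<in> vecs hg T"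
  then have S: "finite S" and T: "finite T" and d: "S \<inter> T = {}" by auto
  have U: "finite (S \<union> T)" using S T by simp
  let ?A = "hg S \<times> hg T"
  let ?F = "\<lambda>(b1, b2). f b1 * g b2"
  let ?m = "\<lambda>(b1, b2). b1 \<union> b2"
  have finA: "finite ?A" using S T finite_hg by simp
  have R: "dual_mult hg hg_comult S T (sdPhi S f) (sdPhi T g) c
      = (\<Sum>b1\<in>hg S. \<Sum>b2\<in>hg T. sdPhi S f b1 * sdPhi T g b2 *
           (if c \<in> hg (S \<union> T) \<and> hg_restrict c S = b1 \<and> hg_restrict c T = b2 then 1 else 0))"
    unfolding dual_mult_def by (simp add: hg_comult_delta[OF S T])
  show "sdPhi (S \<union> T) (hg_mult S T f g) c = dual_mult hg hg_comult S T (sdPhi S f) (sdPhi T g) c"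
  proof (cases "c \<in> hg (S \<union> T)")
    case False then show ?thesis unfolding R by (simp add: sdPhi_def)
  next
    case c: True
    have cS: "hg_restrict c S \<in> hg S" and cT: "hg_restrict c T \<in> hg T"
      using c by (auto intro: hg_restrict_hg)
    have "dual_mult hg hg_comult S T (sdPhi S f) (sdPhi T g) c
        = (\<Sum>b1\<in>hg S. if b1 = hg_restrict c S then (\<Sum>b2\<in>hg T. if b2 = hg_restrict c T then
              sdPhi S f b1 * sdPhi T g b2 else 0) else 0)"
      unfolding R using c by (intro sum.cong refl) (auto intro!: sum.cong)
    also have "\<dots> = sdPhi S f (hg_restrict c S) * sdPhi T g (hg_restrict c T)"
      using S T cS cT by (simp add: sum.delta' finite_hg)
    also have "\<dots> = (\<Sum>b1\<in>hg S. if b1 \<inter> c = {} then f b1 else 0) * (\<Sum>b2\<in>hg T. if b2 \<inter> c = {} then g b2 else 0)"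
      using cS cT by (simp add: sdPhi_def hg_Int_restrict cong: sum.cong)
    also have "\<dots> = (\<Sum>p\<in>?A. if ?m p \<inter> c = {} then ?F p else 0)"
      unfolding sum_product sum.cartesian_product
      by (rule sum.cong) (auto simp: Int_Un_distrib2 split: if_splits)
    also have "\<dots> = (\<Sum>x\<in>hg (S \<union> T). if x \<inter> c = {} then (\<Sum>p\<in>?A. if ?m p = x then ?F p else 0) else 0)"
      by (rule sum_push_comp[symmetric]) (use finA finite_hg U in \<open>auto intro: hg_Un\<close>)
    also have "\<dots> = sdPhi (S \<union> T) (hg_mult S T f g) c"
      unfolding sdPhi_def hg_mult_def lin_mult_def using c
      by (simp, intro sum.cong refl) (auto simp: sum.cartesian_product intro!: sum.cong split: prod.splits)
    finally show ?thesis by simp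
  qed
qed

lemma sd_comonoid_pt:
  fixes h :: "nat set set \<Rightarrow> 'k::comm_ring_1"
  assumes S: "finite S" and T: "finite T" and d: "S \<inter> T = {}"
  shows "dual_comult hg hg_mult S T (sdPhi (S \<union> T) h) (h1, h2)
       = tensor_map hg S T (sdPhi S) (sdPhi T) (hg_comult S T h) (h1, h2)"
proof -
  have U: "finite (S \<union> T)" using S T by simp
  have L: "dual_comult hg hg_mult S T (sdPhi (S \<union> T) h) (h1, h2)
      = (\<Sum>b\<in>hg (S \<union> T). sdPhi (S \<union> T) h b * (if h1 \<in> hg S \<and> h2 \<in> hg T \<and> h1 \<union> h2 = b then 1 else 0))"
    unfolding dual_comult_def by (simp add: hg_mult_delta[OF S T])
  have R: "tensor_map hg S T (sdPhi S) (sdPhi T) (hg_comult S T h) (h1, h2)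
      = (\<Sum>b1\<in>hg S. \<Sum>b2\<in>hg T. hg_comult S T h (b1, b2) *
           (if h1 \<in> hg S \<and> b1 \<inter> h1 = {} then 1 else 0) * (if h2 \<in> hg T \<and> b2 \<inter> h2 = {} then 1 else 0))"
    unfolding tensor_map_def using S T by (simp add: sdPhi_delta cong: sum.cong)
  show ?thesis
  proof (cases "h1 \<in> hg S \<and> h2 \<in> hg T")
    case False then show ?thesis unfolding L R by auto
  next
    case True
    then have h1: "h1 \<in> hg S" and h2: "h2 \<in> hg T" by auto
    have h12: "h1 \<union> h2 \<in> hg (S \<union> T)" using h1 h2 by (rule hg_Un)
    let ?A = "hg S \<times> hg T"
    let ?\<rho> = "\<lambda>b. (hg_restrict b S, hg_restrict b T)"
    let ?\<kappa> = "\<lambda>(b1, b2). b1 \<inter> h1 = {} \<and> b2 \<inter> h2 = {}"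
    have finA: "finite ?A" using S T finite_hg by simp
    have "dual_comult hg hg_mult S T (sdPhi (S \<union> T) h) (h1, h2) = sdPhi (S \<union> T) h (h1 \<union> h2)"
      unfolding L using U h1 h2 h12
      by (simp add: finite_hg if_distrib sum.delta' cong: if_cong)
    also have "\<dots> = (\<Sum>b\<in>hg (S \<union> T). if ?\<kappa> (?\<rho> b) then h b else 0)"
    proof -
      have "b \<inter> (h1 \<union> h2) = {} \<longleftrightarrow> ?\<kappa> (?\<rho> b)" for b
        using hg_Int_restrict[OF h1, of b] hg_Int_restrict[OF h2, of b]
        by (auto simp: Int_commute)
      then show ?thesis using h12 by (simp add: sdPhi_def)
    qed
    also have "\<dots> = (\<Sum>p\<in>?A. if ?\<kappa> p then (\<Sum>b\<in>hg (S \<union> T). if ?\<rho> b = p then h b else 0) else 0)"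
    proof -
      have "(\<Sum>p\<in>?A. if ?\<kappa> p = True then (\<Sum>b\<in>hg (S \<union> T). if ?\<rho> b = p then h b else 0) else 0)
          = (\<Sum>b\<in>hg (S \<union> T). if ?\<kappa> (?\<rho> b) = True then h b else 0)"
        by (rule sum_push_comp) (use finA finite_hg U in \<open>auto intro: hg_restrict_hg\<close>)
      then show ?thesis by simp
    qed
    also have "\<dots> = tensor_map hg S T (sdPhi S) (sdPhi T) (hg_comult S T h) (h1, h2)"
      unfolding R unfolding hg_comult_def lin_comult_def sum.cartesian_product using h1 h2
      by (intro sum.cong refl) (auto intro!: sum.cong split: if_splits)
    finally show ?thesis .
  qed
qed

lemma sd_comonoid:
  "comonoid_compat hg hg_comult (dual_comult hg hg_mult) (sdPhi :: nat set \<Rightarrow> (nat set set \<Rightarrow> 'k::field) \<Rightarrow> _)"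
  unfolding comonoid_compat_def
proof (intro allI impI ballI ext)
  fix S T :: "nat set" and h :: "nat set set \<Rightarrow> 'k" and p :: "nat set set \<times> nat set set"
  assume "finite S \<and> finite T \<and> S \<inter> T = {}"
  then show "dual_comult hg hg_mult S T (sdPhi (S \<union> T) h) p = tensor_map hg S T (sdPhi S) (sdPhi T) (hg_comult S T h) p"
    by (cases p) (auto intro: sd_comonoid_pt)
qed

lemma self_dual: "hg_self_dual TYPE('k::field)"
  unfolding hg_self_dual_def using species_iso_sd sd_monoid sd_comonoid by blast



section \<open>Connected components\<close>

definition erel :: "nat set set \<Rightarrow> (nat \<times> nat) set" where
  "erel E = {(x, y). \<exists>U\<in>E. x \<in> U \<and> y \<in> U}"

definition conn :: "nat set \<Rightarrow> nat set set \<Rightarrow> bool" where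
  "conn A E \<longleftrightarrow> A \<noteq> {} \<and> (\<forall>x\<in>A. \<forall>y\<in>A. (x, y) \<in> (erel E)\<^sup>*)"

definition crel :: "nat set \<Rightarrow> nat set set \<Rightarrow> (nat \<times> nat) set" where
  "crel I E = {(x, y). x \<in> I \<and> y \<in> I \<and> (x, y) \<in> (erel E)\<^sup>*}"

definition comps :: "nat set \<Rightarrow> nat set set \<Rightarrow> nat set set" where
  "comps I E = I // crel I E"

lemma sym_erel: "sym (erel E)"
  by (auto simp: erel_def sym_def)

lemma sym_erel_star: "(x, y) \<in> (erel E)\<^sup>* \<Longrightarrow> (y, x) \<in> (erel E)\<^sup>*"
  using sym_rtrancl[OF sym_erel[of E]] by (auto simp: sym_def)

lemma erel_mono: "E \<subseteq> E' \<Longrightarrow> (erel E)\<^sup>* \<subseteq> (erel E')\<^sup>*"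
  by (rule rtrancl_mono) (auto simp: erel_def)

lemma equiv_crel: "equiv I (crel I E)"
proof (rule equivI)
  show "crel I E \<subseteq> I \<times> I" by (auto simp: crel_def)
  show "refl_on I (crel I E)" by (auto simp: crel_def refl_on_def)
  show "sym (crel I E)" by (auto simp: crel_def sym_def intro: sym_erel_star)
  show "trans (crel I E)" by (auto simp: crel_def trans_def intro: rtrancl_trans)
qed

lemma partition_comps: "partition_on I (comps I E)"
  unfolding comps_def by (rule partition_on_quotient[OF equiv_crel])

lemma comps_eq:
  assumes P: "partition_on I P" and E: "E \<in> hg I"
  and cov: "\<And>U. U \<in> E \<Longrightarrow> \<exists>A\<in>P. U \<subseteq> A"
  and cn: "\<And>A. A \<in> P \<Longrightarrow> conn A (hg_restrict E A)"
  shows "comps I E = P"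
proof -
  let ?R = "{(x, y). \<exists>A\<in>P. x \<in> A \<and> y \<in> A}"
  have eqv: "equiv I ?R" by (rule equiv_partition_on[OF P])
  have "crel I E = ?R"
  proof
    show "crel I E \<subseteq> ?R"
    proof
      fix p assume "p \<in> crel I E"
      then obtain x y where p: "p = (x, y)" "x \<in> I" "y \<in> I" and path: "(x, y) \<in> (erel E)\<^sup>*"
        by (auto simp: crel_def)
      have "(x, z) \<in> ?R" if "(x, z) \<in> (erel E)\<^sup>*" for z
        using that
      proof (induction rule: rtrancl_induct)
        case base
        then show ?case using eqv \<open>x \<in> I\<close> by (auto simp: equiv_def refl_on_def)
      next
        case (step y z)
        then obtain U where U: "U \<in> E" "y \<in> U" "z \<in> U" by (auto simp: erel_def)
        obtain A where A: "A \<in> P" "U \<subseteq> A" using cov[OF U(1)] by blast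
        have "(y, z) \<in> ?R" using A U by blast
        then show ?case using step.IH eqv by (meson equiv_def transE)
      qed
      then show "p \<in> ?R" using p path by simp
    qed
    show "?R \<subseteq> crel I E"
    proof
      fix p assume "p \<in> ?R"
      then obtain x y A where p: "p = (x, y)" "A \<in> P" "x \<in> A" "y \<in> A" by blast
      have AI: "A \<subseteq> I" using P p(2) by (auto simp: partition_on_def)
      have "(x, y) \<in> (erel (hg_restrict E A))\<^sup>*" using cn[OF p(2)] p by (auto simp: conn_def)
      moreover have "(erel (hg_restrict E A))\<^sup>* \<subseteq> (erel E)\<^sup>*"
        by (rule erel_mono) (auto simp: hg_restrict_def)
      ultimately show "p \<in> crel I E" using p AI by (auto simp: crel_def)
    qed
  qed
  then show ?thesis unfolding comps_def using partition_on_eq_quotient[OF P] by simp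
qed

lemma comps_conn:
  assumes E: "E \<in> hg I" and A: "A \<in> comps I E"
  shows "conn A (hg_restrict E A)"
proof -
  obtain x0 where x0: "x0 \<in> I" "A = crel I E `` {x0}"
    using A by (auto simp: comps_def quotient_def)
  have memA: "w \<in> A \<longleftrightarrow> w \<in> I \<and> (x0, w) \<in> (erel E)\<^sup>*" for w
    using x0 by (auto simp: crel_def)
  have key: "(x0, z) \<in> (erel (hg_restrict E A))\<^sup>*" if "(x0, z) \<in> (erel E)\<^sup>*" for z
    using that
  proof (induction rule: rtrancl_induct)
    case base then show ?case by simp
  next
    case (step y z)
    then obtain U where U: "U \<in> E" "y \<in> U" "z \<in> U" by (auto simp: erel_def)
    have "U \<subseteq> A"
    proof
      fix w assume "w \<in> U"
      then have "(y, w) \<in> erel E" using U by (auto simp: erel_def)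
      then have "(x0, w) \<in> (erel E)\<^sup>*" using step.hyps(1) by simp
      moreover have "w \<in> I" using hg_edge[OF E U(1)] \<open>w \<in> U\<close> by auto
      ultimately show "w \<in> A" using memA by simp
    qed
    then have "(y, z) \<in> erel (hg_restrict E A)" using U by (auto simp: erel_def hg_restrict_def)
    then show ?case using step.IH by simp
  qed
  show ?thesis unfolding conn_def
  proof (intro conjI ballI)
    show "A \<noteq> {}" using x0 by (auto simp: crel_def)
    fix x y assume x: "x \<in> A" and y: "y \<in> A"
    have "(x0, x) \<in> (erel (hg_restrict E A))\<^sup>*" "(x0, y) \<in> (erel (hg_restrict E A))\<^sup>*"
      using key x y memA by auto
    then show "(x, y) \<in> (erel (hg_restrict E A))\<^sup>*"
      by (meson rtrancl_trans sym_erel_star)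
  qed
qed

lemma comps_cover:
  assumes E: "E \<in> hg I" and U: "U \<in> E"
  shows "\<exists>A\<in>comps I E. U \<subseteq> A"
proof -
  obtain u where u: "u \<in> U" using hg_edge_ne[OF E U] by blast
  have uI: "u \<in> I" using hg_edge[OF E U] u by auto
  have "U \<subseteq> crel I E `` {u}"
  proof
    fix w assume "w \<in> U"
    then have "(u, w) \<in> erel E" using U u by (auto simp: erel_def)
    moreover have "w \<in> I" using hg_edge[OF E U] \<open>w \<in> U\<close> by auto
    ultimately show "w \<in> crel I E `` {u}" using uI by (auto simp: crel_def)
  qed
  moreover have "crel I E `` {u} \<in> comps I E" using uI by (auto simp: comps_def quotient_def)
  ultimately show ?thesis by blast
qed

lemma comps_sub: "A \<in> comps I E \<Longrightarrow> A \<subseteq> I"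
  using partition_comps[of I E] by (auto simp: partition_on_def)

lemma comps_ne: "A \<in> comps I E \<Longrightarrow> A \<noteq> {}"
  using partition_comps[of I E] by (auto simp: partition_on_def)

lemma restrict_union:
  assumes E: "E \<in> hg I"
  shows "(\<Union>A\<in>comps I E. hg_restrict E A) = E"
  using comps_cover[OF E] by (auto simp: hg_restrict_def)

lemma erel_relabel_star:
  "(x, y) \<in> (erel E)\<^sup>* \<Longrightarrow> (\<sigma> x, \<sigma> y) \<in> (erel (hg_relabel \<sigma> E))\<^sup>*"
proof (induction rule: rtrancl_induct)
  case base then show ?case by simp
next
  case (step y z)
  then obtain U where U: "U \<in> E" "y \<in> U" "z \<in> U" by (auto simp: erel_def)
  have "(\<sigma> y, \<sigma> z) \<in> erel (hg_relabel \<sigma> E)"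
    using U unfolding erel_def hg_relabel_def by blast
  then show ?case using step.IH by simp
qed

lemma conn_relabel: "conn A E \<Longrightarrow> conn (\<sigma> ` A) (hg_relabel \<sigma> E)"
  unfolding conn_def using erel_relabel_star by blast

lemma hg_relabel_hg: "finite I \<Longrightarrow> bij_betw \<sigma> I J \<Longrightarrow> E \<in> hg I \<Longrightarrow> hg_relabel \<sigma> E \<in> hg J"
  using relabel_bij by (auto simp: bij_betw_def)

lemma restrict_relabel:
  assumes inj: "inj_on \<sigma> I" and E: "E \<in> hg I" and A: "A \<subseteq> I"
  shows "hg_restrict (hg_relabel \<sigma> E) (\<sigma> ` A) = hg_relabel \<sigma> (hg_restrict E A)"
proof -
  have "\<sigma> ` U \<subseteq> \<sigma> ` A \<longleftrightarrow> U \<subseteq> A" if U: "U \<in> E" for U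
  proof
    assume h: "\<sigma> ` U \<subseteq> \<sigma> ` A"
    show "U \<subseteq> A"
    proof
      fix x assume x: "x \<in> U"
      then have "x \<in> I" using hg_edge[OF E U] by auto
      moreover have "\<sigma> x \<in> \<sigma> ` A" using h x by auto
      ultimately show "x \<in> A" using inj_on_image_mem_iff[OF inj _ A] by blast
    qed
  qed auto
  then show ?thesis unfolding hg_restrict_def hg_relabel_def by auto
qed

lemma comps_relabel:
  assumes I: "finite I" and s: "bij_betw \<sigma> I J" and E: "E \<in> hg I"
  shows "comps J (hg_relabel \<sigma> E) = image \<sigma> ` comps I E"
proof (rule comps_eq)
  have inj: "inj_on \<sigma> I" and J: "\<sigma> ` I = J" using s by (auto simp: bij_betw_def)
  have "partition_on (\<sigma> ` I) (image \<sigma> ` comps I E - {{}})"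
    by (rule partition_on_inj_image[OF partition_comps inj])
  moreover have "image \<sigma> ` comps I E - {{}} = image \<sigma> ` comps I E"
    using comps_ne by auto
  ultimately show "partition_on J (image \<sigma> ` comps I E)" using J by simp
  show "hg_relabel \<sigma> E \<in> hg J" by (rule hg_relabel_hg[OF I s E])
  fix V assume "V \<in> hg_relabel \<sigma> E"
  then obtain U where U: "U \<in> E" "V = \<sigma> ` U" by (auto simp: hg_relabel_def)
  obtain A where "A \<in> comps I E" "U \<subseteq> A" using comps_cover[OF E U(1)] by blast
  then show "\<exists>B\<in>image \<sigma> ` comps I E. V \<subseteq> B" using U by blast
next
  have inj: "inj_on \<sigma> I" using s by (auto simp: bij_betw_def)
  fix B assume "B \<in> image \<sigma> ` comps I E"
  then obtain A where A: "A \<in> comps I E" "B = \<sigma> ` A" by blast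
  have "hg_restrict (hg_relabel \<sigma> E) B = hg_relabel \<sigma> (hg_restrict E A)"
    using restrict_relabel[OF inj E comps_sub[OF A(1)]] A(2) by simp
  then show "conn B (hg_restrict (hg_relabel \<sigma> E) B)"
    using conn_relabel[OF comps_conn[OF E A(1)]] A(2) by simp
qed

lemma partition_on_Un:
  assumes P: "partition_on S P" and Q: "partition_on T Q" and d: "S \<inter> T = {}"
  shows "partition_on (S \<union> T) (P \<union> Q)"
proof (rule partition_onI)
  show "\<Union>(P \<union> Q) = S \<union> T" using P Q by (auto simp: partition_on_def)
  show "{} \<notin> P \<union> Q" using P Q by (auto simp: partition_on_def)
  fix p q assume p: "p \<in> P \<union> Q" and q: "q \<in> P \<union> Q" and pq: "p \<noteq> q"
  have PS: "\<And>A. A \<in> P \<Longrightarrow> A \<subseteq> S" and QT: "\<And>A. A \<in> Q \<Longrightarrow> A \<subseteq> T"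
    using P Q by (auto simp: partition_on_def)
  show "disjnt p q"
  proof (cases "p \<in> P")
    case True
    show ?thesis
    proof (cases "q \<in> P")
      case True then show ?thesis using \<open>p \<in> P\<close> pq P by (auto simp: partition_on_def disjoint_def disjnt_def)
    next
      case False then have "q \<in> Q" using q by auto
      then show ?thesis using PS[OF \<open>p \<in> P\<close>] QT d by (auto simp: disjnt_def)
    qed
  next
    case False then have pQ: "p \<in> Q" using p by auto
    show ?thesis
    proof (cases "q \<in> P")
      case True then show ?thesis using PS QT[OF pQ] d by (auto simp: disjnt_def)
    next
      case False then have "q \<in> Q" using q by auto
      then show ?thesis using pQ pq Q by (auto simp: partition_on_def disjoint_def disjnt_def)
    qed
  qed
qed

lemma restrict_Un_left:
  assumes d: "S \<inter> T = {}" and E1: "E1 \<in> hg S" and E2: "E2 \<in> hg T" and A: "A \<subseteq> S"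
  shows "hg_restrict (E1 \<union> E2) A = hg_restrict E1 A"
proof -
  have "\<not> U \<subseteq> A" if "U \<in> E2" for U
    using hg_edge_ne[OF E2 that] hg_edge[OF E2 that] A d by blast
  then show ?thesis by (auto simp: hg_restrict_def)
qed

lemma comps_Un:
  assumes d: "S \<inter> T = {}" and E1: "E1 \<in> hg S" and E2: "E2 \<in> hg T"
  shows "comps (S \<union> T) (E1 \<union> E2) = comps S E1 \<union> comps T E2"
proof (rule comps_eq)
  show "partition_on (S \<union> T) (comps S E1 \<union> comps T E2)"
    by (rule partition_on_Un[OF partition_comps partition_comps d])
  show "E1 \<union> E2 \<in> hg (S \<union> T)" by (rule hg_Un[OF E1 E2])
  fix U assume "U \<in> E1 \<union> E2"
  then show "\<exists>A\<in>comps S E1 \<union> comps T E2. U \<subseteq> A"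
    using comps_cover[OF E1] comps_cover[OF E2] by blast
next
  fix A assume A: "A \<in> comps S E1 \<union> comps T E2"
  show "conn A (hg_restrict (E1 \<union> E2) A)"
  proof (cases "A \<in> comps S E1")
    case True
    then show ?thesis using restrict_Un_left[OF d E1 E2 comps_sub[OF True]] comps_conn[OF E1 True] by simp
  next
    case False
    then have A2: "A \<in> comps T E2" using A by auto
    have d': "T \<inter> S = {}" using d by auto
    have "hg_restrict (E1 \<union> E2) A = hg_restrict E2 A"
      using restrict_Un_left[OF d' E2 E1 comps_sub[OF A2]] by (simp add: Un_commute)
    then show ?thesis using comps_conn[OF E2 A2] by simp
  qed
qed

section \<open>Encoding and the species q\<close>

definition enc :: "nat set set \<Rightarrow> nat" where
  "enc E = set_encode (set_encode ` E)"

definition dec :: "nat \<Rightarrow> nat set set" where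
  "dec n = set_decode ` set_decode n"

lemma dec_enc:
  assumes "finite E" "\<And>U. U \<in> E \<Longrightarrow> finite U"
  shows "dec (enc E) = E"
proof -
  have "set_decode (set_encode (set_encode ` E)) = set_encode ` E" using assms(1) by simp
  then show ?thesis unfolding dec_def enc_def using assms(2) by (simp add: image_image)
qed

lemma hg_finite_elems:
  assumes I: "finite I" and E: "E \<in> hg I"
  shows "finite E" "\<And>U. U \<in> E \<Longrightarrow> finite U"
proof -
  have "E \<subseteq> Uof I" using E by (simp add: hg_Pow)
  then show "finite E" by (rule finite_subset[OF _ finite_Uof[OF I]])
  fix U assume "U \<in> E"
  then have "U \<subseteq> I" using hg_edge[OF E] by blast
  then show "finite U" using I by (rule finite_subset)
qed

lemma dec_enc_hg: assumes "finite I" "E \<in> hg I" shows "dec (enc E) = E"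
  by (rule dec_enc[OF hg_finite_elems(1)[OF assms] hg_finite_elems(2)[OF assms]])

definition qset :: "nat set \<Rightarrow> nat set" where
  "qset A = enc ` {E\<in>hg A. conn A E}"

definition qmap :: "(nat \<Rightarrow> nat) \<Rightarrow> nat set \<Rightarrow> nat \<Rightarrow> nat" where
  "qmap \<sigma> A x = enc (hg_relabel \<sigma> (dec x))"

lemma qset_empty: "qset {} = {}"
  by (auto simp: qset_def conn_def)

lemma hg_relabel_id: "hg_relabel id E = E"
  by (simp add: hg_relabel_def)

lemma hg_relabel_comp: "hg_relabel (\<tau> \<circ> \<sigma>) E = hg_relabel \<tau> (hg_relabel \<sigma> E)"
  by (simp add: hg_relabel_def image_comp image_image)

lemma qmap_enc: "finite A \<Longrightarrow> E \<in> hg A \<Longrightarrow> qmap \<sigma> A (enc E) = enc (hg_relabel \<sigma> E)"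
  by (simp add: qmap_def dec_enc_hg)

lemma set_species_q: "set_species qset qmap"
  unfolding set_species_def
proof (intro conjI allI impI ballI)
  fix A B :: "nat set" and \<sigma> :: "nat \<Rightarrow> nat"
  assume h: "finite A \<and> bij_betw \<sigma> A B"
  then have A: "finite A" and s: "bij_betw \<sigma> A B" by auto
  show "qmap \<sigma> A ` qset A \<subseteq> qset B"
  proof
    fix y assume "y \<in> qmap \<sigma> A ` qset A"
    then obtain E where E: "E \<in> hg A" "conn A E" "y = qmap \<sigma> A (enc E)" by (auto simp: qset_def)
    have "y = enc (hg_relabel \<sigma> E)" using E qmap_enc[OF A E(1)] by simp
    moreover have "hg_relabel \<sigma> E \<in> hg B" by (rule hg_relabel_hg[OF A s E(1)])
    moreover have "conn B (hg_relabel \<sigma> E)"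
      using conn_relabel[OF E(2), of \<sigma>] s by (simp add: bij_betw_def)
    ultimately show "y \<in> qset B" by (auto simp: qset_def)
  qed
next
  fix A :: "nat set" and x assume A: "finite A" and x: "x \<in> qset A"
  then obtain E where E: "E \<in> hg A" "x = enc E" by (auto simp: qset_def)
  show "qmap id A x = x" using qmap_enc[OF A E(1)] E by (simp add: hg_relabel_id)
next
  fix A B C :: "nat set" and \<sigma> \<tau> :: "nat \<Rightarrow> nat" and x
  assume h: "finite A \<and> bij_betw \<sigma> A B \<and> bij_betw \<tau> B C" and x: "x \<in> qset A"
  then have A: "finite A" and s: "bij_betw \<sigma> A B" by auto
  have B: "finite B" using A s bij_betw_finite by blast
  obtain E where E: "E \<in> hg A" "x = enc E" using x by (auto simp: qset_def)
  have E': "hg_relabel \<sigma> E \<in> hg B" by (rule hg_relabel_hg[OF A s E(1)])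
  show "qmap (\<tau> \<circ> \<sigma>) A x = qmap \<tau> B (qmap \<sigma> A x)"
    using E qmap_enc[OF A E(1)] qmap_enc[OF B E'] by (simp add: hg_relabel_comp)
next
  fix A :: "nat set" and \<sigma> \<tau> :: "nat \<Rightarrow> nat" and x
  assume h: "finite A \<and> inj_on \<sigma> A \<and> (\<forall>a\<in>A. \<sigma> a = \<tau> a)" and x: "x \<in> qset A"
  then have A: "finite A" by auto
  obtain E where E: "E \<in> hg A" "x = enc E" using x by (auto simp: qset_def)
  have "hg_relabel \<sigma> E = hg_relabel \<tau> E"
    unfolding hg_relabel_def
  proof (rule image_cong[OF refl])
    fix U assume "U \<in> E"
    then have "U \<subseteq> A" using hg_edge[OF E(1)] by blast
    then show "\<sigma> ` U = \<tau> ` U" using h by (intro image_cong) auto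
  qed
  then show "qmap \<sigma> A x = qmap \<tau> A x" using E qmap_enc[OF A E(1)] by simp
qed

section \<open>The basis bijection\<close>

definition beta :: "nat set \<Rightarrow> nat set set \<Rightarrow> (nat set \<times> nat) set" where
  "beta I E = (\<lambda>A. (A, enc (hg_restrict E A))) ` comps I E"

lemma fst_beta: "fst ` beta I E = comps I E"
  by (simp add: beta_def image_image)

lemma beta_in:
  assumes I: "finite I" and E: "E \<in> hg I"
  shows "beta I E \<in> sq_basis qset I"
proof -
  have 1: "partition_on I (fst ` beta I E)" by (simp add: fst_beta partition_comps)
  have 2: "\<forall>p\<in>beta I E. \<forall>p'\<in>beta I E. fst p = fst p' \<longrightarrow> p = p'" by (auto simp: beta_def)
  have 3: "\<forall>(A, x)\<in>beta I E. x \<in> qset A"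
  proof (clarsimp simp: beta_def)
    fix A assume A: "A \<in> comps I E"
    have "hg_restrict E A \<in> hg A" by (rule hg_restrict_hg[OF E])
    then show "enc (hg_restrict E A) \<in> qset A"
      using comps_conn[OF E A] by (auto simp: qset_def)
  qed
  show ?thesis unfolding sq_basis_def using 1 2 3 by (intro CollectI conjI)
qed

lemma beta_recover:
  assumes I: "finite I" and E: "E \<in> hg I"
  shows "(\<Union>p\<in>beta I E. dec (snd p)) = E"
proof -
  have "(\<Union>p\<in>beta I E. dec (snd p)) = (\<Union>A\<in>comps I E. dec (enc (hg_restrict E A)))"
    by (simp add: beta_def)
  also have "\<dots> = (\<Union>A\<in>comps I E. hg_restrict E A)"
  proof (rule SUP_cong[OF refl])
    fix A assume A: "A \<in> comps I E"
    have AI: "finite A" using comps_sub[OF A] I by (rule finite_subset)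
    show "dec (enc (hg_restrict E A)) = hg_restrict E A"
      by (rule dec_enc_hg[OF AI hg_restrict_hg[OF E]])
  qed
  also have "\<dots> = E" by (rule restrict_union[OF E])
  finally show ?thesis .
qed

lemma beta_inj:
  assumes I: "finite I" shows "inj_on (beta I) (hg I)"
proof (rule inj_onI)
  fix E E' assume E: "E \<in> hg I" and E': "E' \<in> hg I" and eq: "beta I E = beta I E'"
  have "E = (\<Union>p\<in>beta I E. dec (snd p))" using beta_recover[OF I E] by simp
  also have "\<dots> = (\<Union>p\<in>beta I E'. dec (snd p))" by (simp only: eq)
  also have "\<dots> = E'" by (rule beta_recover[OF I E'])
  finally show "E = E'" .
qed

lemma beta_surj:
  assumes I: "finite I" and X: "X \<in> sq_basis qset I"
  shows "\<exists>E\<in>hg I. beta I E = X"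
proof -
  have P: "partition_on I (fst ` X)" and uq: "\<And>p p'. p \<in> X \<Longrightarrow> p' \<in> X \<Longrightarrow> fst p = fst p' \<Longrightarrow> p = p'"
    and qs: "\<And>p. p \<in> X \<Longrightarrow> snd p \<in> qset (fst p)"
    using X by (auto simp: sq_basis_def)
  let ?G = "\<lambda>p. dec (snd p)"
  have G: "?G p \<in> hg (fst p) \<and> conn (fst p) (?G p) \<and> enc (?G p) = snd p" if p: "p \<in> X" for p
  proof -
    obtain F where F: "F \<in> hg (fst p)" "conn (fst p) F" "snd p = enc F"
      using qs[OF p] by (auto simp: qset_def)
    have "fst p \<subseteq> I" using P p by (auto simp: partition_on_def)
    then have "finite (fst p)" using I by (rule finite_subset)
    then have "?G p = F" using F by (simp add: dec_enc_hg)
    then show ?thesis using F by simp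
  qed
  have sub: "fst p \<subseteq> I" if "p \<in> X" for p using P that by (auto simp: partition_on_def)
  define E where "E = (\<Union>p\<in>X. ?G p)"
  have E: "E \<in> hg I"
    unfolding hg_def E_def
  proof (clarify)
    fix U p assume p: "p \<in> X" and U: "U \<in> ?G p"
    then have "U \<subseteq> fst p \<and> 2 \<le> card U" using G[OF p] hg_edge by blast
    then show "U \<subseteq> I \<and> 2 \<le> card U" using sub[OF p] by auto
  qed
  have restr: "hg_restrict E (fst p) = ?G p" if p: "p \<in> X" for p
  proof
    show "?G p \<subseteq> hg_restrict E (fst p)"
      using G[OF p] p hg_edge by (fastforce simp: hg_restrict_def E_def)
    show "hg_restrict E (fst p) \<subseteq> ?G p"
    proof
      fix U assume "U \<in> hg_restrict E (fst p)"
      then obtain q where q: "q \<in> X" "U \<in> ?G q" "U \<subseteq> fst p" by (auto simp: hg_restrict_def E_def)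
      have "U \<subseteq> fst q" "U \<noteq> {}" using G[OF q(1)] q(2) hg_edge hg_edge_ne by blast+
      then have "fst q \<inter> fst p \<noteq> {}" using q(3) by blast
      then have "fst q = fst p" using P p q(1) by (auto simp: partition_on_def disjoint_def)
      then have "q = p" using uq p q(1) by blast
      then show "U \<in> ?G p" using q by simp
    qed
  qed
  have comps: "comps I E = fst ` X"
  proof (rule comps_eq[OF P E])
    fix U assume "U \<in> E"
    then obtain p where p: "p \<in> X" "U \<in> ?G p" by (auto simp: E_def)
    then have "U \<subseteq> fst p" using G[OF p(1)] hg_edge by blast
    then show "\<exists>A\<in>fst ` X. U \<subseteq> A" using p by blast
  next
    fix A assume "A \<in> fst ` X"
    then obtain p where p: "p \<in> X" "A = fst p" by blast
    show "conn A (hg_restrict E A)" using restr[OF p(1)] G[OF p(1)] p(2) by simp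
  qed
  have "beta I E = (\<lambda>p. (fst p, enc (hg_restrict E (fst p)))) ` X"
    unfolding beta_def comps by (simp add: image_image)
  also have "\<dots> = (\<lambda>p. p) ` X"
  proof (rule image_cong[OF refl])
    fix p assume p: "p \<in> X"
    show "(fst p, enc (hg_restrict E (fst p))) = p" using restr[OF p] G[OF p] by simp
  qed
  finally show ?thesis using E by auto
qed

lemma beta_bij:
  assumes I: "finite I" shows "bij_betw (beta I) (hg I) (sq_basis qset I)"
  unfolding bij_betw_def
proof
  show "inj_on (beta I) (hg I)" by (rule beta_inj[OF I])
  show "beta I ` hg I = sq_basis qset I"
  proof
    show "beta I ` hg I \<subseteq> sq_basis qset I" using beta_in[OF I] by blast
    show "sq_basis qset I \<subseteq> beta I ` hg I"
    proof
      fix X assume "X \<in> sq_basis qset I"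
      then obtain E where "E \<in> hg I" "beta I E = X" using beta_surj[OF I] by blast
      then show "X \<in> beta I ` hg I" by blast
    qed
  qed
qed

lemma beta_Un:
  assumes d: "S \<inter> T = {}" and E1: "E1 \<in> hg S" and E2: "E2 \<in> hg T"
  shows "beta (S \<union> T) (E1 \<union> E2) = beta S E1 \<union> beta T E2"
proof -
  have d': "T \<inter> S = {}" using d by auto
  have "beta (S \<union> T) (E1 \<union> E2)
      = (\<lambda>A. (A, enc (hg_restrict (E1 \<union> E2) A))) ` comps S E1 \<union> (\<lambda>A. (A, enc (hg_restrict (E1 \<union> E2) A))) ` comps T E2"
    unfolding beta_def comps_Un[OF d E1 E2] by (rule image_Un)
  also have "(\<lambda>A. (A, enc (hg_restrict (E1 \<union> E2) A))) ` comps S E1 = beta S E1"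
    unfolding beta_def
    by (rule image_cong[OF refl]) (simp add: restrict_Un_left[OF d E1 E2 comps_sub])
  also have "(\<lambda>A. (A, enc (hg_restrict (E1 \<union> E2) A))) ` comps T E2 = beta T E2"
    unfolding beta_def
  proof (rule image_cong[OF refl])
    fix A assume A: "A \<in> comps T E2"
    have "hg_restrict (E1 \<union> E2) A = hg_restrict E2 A"
      using restrict_Un_left[OF d' E2 E1 comps_sub[OF A]] by (simp add: Un_commute)
    then show "(A, enc (hg_restrict (E1 \<union> E2) A)) = (A, enc (hg_restrict E2 A))" by simp
  qed
  finally show ?thesis .
qed

lemma beta_relabel:
  assumes I: "finite I" and s: "bij_betw \<sigma> I J" and E: "E \<in> hg I"
  shows "beta J (hg_relabel \<sigma> E) = sq_relabel qmap \<sigma> (beta I E)"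
proof -
  have inj: "inj_on \<sigma> I" using s by (simp add: bij_betw_def)
  have "beta J (hg_relabel \<sigma> E) = (\<lambda>A. (\<sigma> ` A, enc (hg_restrict (hg_relabel \<sigma> E) (\<sigma> ` A)))) ` comps I E"
    unfolding beta_def comps_relabel[OF I s E] by (simp add: image_image)
  also have "\<dots> = (\<lambda>A. (\<sigma> ` A, qmap \<sigma> A (enc (hg_restrict E A)))) ` comps I E"
  proof (rule image_cong[OF refl])
    fix A assume A: "A \<in> comps I E"
    have AI: "A \<subseteq> I" by (rule comps_sub[OF A])
    have fA: "finite A" using AI I by (rule finite_subset)
    have "qmap \<sigma> A (enc (hg_restrict E A)) = enc (hg_relabel \<sigma> (hg_restrict E A))"
      by (rule qmap_enc[OF fA hg_restrict_hg[OF E]])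
    also have "\<dots> = enc (hg_restrict (hg_relabel \<sigma> E) (\<sigma> ` A))"
      by (simp add: restrict_relabel[OF inj E AI])
    finally show "(\<sigma> ` A, enc (hg_restrict (hg_relabel \<sigma> E) (\<sigma> ` A))) = (\<sigma> ` A, qmap \<sigma> A (enc (hg_restrict E A)))"
      by simp
  qed
  also have "\<dots> = sq_relabel qmap \<sigma> (beta I E)"
    unfolding sq_relabel_def beta_def by (simp add: image_image)
  finally show ?thesis .
qed



lemma sqbD:
  assumes "X \<in> sq_basis qs I"
  shows "partition_on I (fst ` X)" "\<And>p p'. p \<in> X \<Longrightarrow> p' \<in> X \<Longrightarrow> fst p = fst p' \<Longrightarrow> p = p'"
    "\<And>p. p \<in> X \<Longrightarrow> snd p \<in> qs (fst p)"
  using assms by (auto simp: sq_basis_def)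

lemma sqb_block:
  assumes "X \<in> sq_basis qs I" "p \<in> X"
  shows "fst p \<subseteq> I" "fst p \<noteq> {}"
  using sqbD(1)[OF assms(1)] assms(2) by (auto simp: partition_on_def)

lemma sqb_disj:
  assumes "X \<in> sq_basis qs I" "p \<in> X" "q \<in> X" "x \<in> fst p" "x \<in> fst q"
  shows "p = q"
proof -
  have "fst p = fst q"
    using sqbD(1)[OF assms(1)] assms(2-5) by (auto simp: partition_on_def disjoint_def)
  then show ?thesis using sqbD(2)[OF assms(1) assms(2,3)] by simp
qed

lemma sqbI:
  assumes "\<Union>(fst ` X) = I" "\<And>p q x. p \<in> X \<Longrightarrow> q \<in> X \<Longrightarrow> x \<in> fst p \<Longrightarrow> x \<in> fst q \<Longrightarrow> p = q"
    "\<And>p. p \<in> X \<Longrightarrow> fst p \<noteq> {}" "\<And>p. p \<in> X \<Longrightarrow> snd p \<in> qs (fst p)"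
  shows "X \<in> sq_basis qs I"
proof -
  have "partition_on I (fst ` X)"
  proof (rule partition_onI)
    show "\<Union>(fst ` X) = I" by (rule assms(1))
    show "{} \<notin> fst ` X" using assms(3) by force
    fix a b assume ab: "a \<in> fst ` X" "b \<in> fst ` X" "a \<noteq> b"
    then obtain p q where pq: "p \<in> X" "q \<in> X" "a = fst p" "b = fst q" by blast
    show "disjnt a b"
    proof (rule ccontr)
      assume "\<not> disjnt a b"
      then obtain x where "x \<in> a" "x \<in> b" by (auto simp: disjnt_def)
      then have "p = q" using assms(2)[OF pq(1,2)] pq by simp
      then show False using ab(3) pq by simp
    qed
  qed
  moreover have "\<forall>p\<in>X. \<forall>p'\<in>X. fst p = fst p' \<longrightarrow> p = p'"
    using assms(2,3) by (metis all_not_in_conv)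
  moreover have "\<forall>(A, x)\<in>X. x \<in> qs A" using assms(4) by auto
  ultimately show ?thesis unfolding sq_basis_def by blast
qed

lemma sq_split:
  assumes d: "S \<inter> T = {}" and X: "X \<in> sq_basis qs (S \<union> T)"
  and cov: "S = \<Union> {A\<in>fst ` X. A \<subseteq> S}"
  shows "{p\<in>X. fst p \<subseteq> S} \<in> sq_basis qs S" "{p\<in>X. fst p \<subseteq> T} \<in> sq_basis qs T"
    "X = {p\<in>X. fst p \<subseteq> S} \<union> {p\<in>X. fst p \<subseteq> T}"
proof -
  have dich: "fst p \<subseteq> S \<or> fst p \<subseteq> T" if p: "p \<in> X" for p
  proof (cases "fst p \<inter> S = {}")
    case True then show ?thesis using sqb_block(1)[OF X p] by blast
  next
    case False
    then obtain x where x: "x \<in> fst p" "x \<in> S" by blast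
    then obtain q where q: "q \<in> X" "fst q \<subseteq> S" "x \<in> fst q" using cov by blast
    have "p = q" by (rule sqb_disj[OF X p q(1) x(1) q(3)])
    then show ?thesis using q by simp
  qed
  show "{p\<in>X. fst p \<subseteq> S} \<in> sq_basis qs S"
  proof (rule sqbI)
    show "\<Union>(fst ` {p\<in>X. fst p \<subseteq> S}) = S" using cov by blast
  qed (use sqb_disj[OF X] sqb_block[OF X] sqbD(3)[OF X] in auto)
  show "{p\<in>X. fst p \<subseteq> T} \<in> sq_basis qs T"
  proof (rule sqbI)
    show "\<Union>(fst ` {p\<in>X. fst p \<subseteq> T}) = T"
    proof
      show "\<Union>(fst ` {p\<in>X. fst p \<subseteq> T}) \<subseteq> T" by blast
      show "T \<subseteq> \<Union>(fst ` {p\<in>X. fst p \<subseteq> T})"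
      proof
        fix t assume t: "t \<in> T"
        then have "t \<in> \<Union>(fst ` X)" using sqbD(1)[OF X] by (auto simp: partition_on_def)
        then obtain p where p: "p \<in> X" "t \<in> fst p" by blast
        have "t \<notin> S" using t d by blast
        then have "fst p \<subseteq> T" using dich[OF p(1)] p(2) by blast
        then show "t \<in> \<Union>(fst ` {p\<in>X. fst p \<subseteq> T})" using p by blast
      qed
    qed
  qed (use sqb_disj[OF X] sqb_block[OF X] sqbD(3)[OF X] in auto)
  show "X = {p\<in>X. fst p \<subseteq> S} \<union> {p\<in>X. fst p \<subseteq> T}" using dich by blast
qed

lemma sq_join:
  assumes d: "S \<inter> T = {}" and X1: "X1 \<in> sq_basis qs S" and X2: "X2 \<in> sq_basis qs T"
  shows "S = \<Union> {A\<in>fst ` (X1 \<union> X2). A \<subseteq> S}" "{p\<in>X1 \<union> X2. fst p \<subseteq> S} = X1"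
    "{p\<in>X1 \<union> X2. fst p \<subseteq> T} = X2"
proof -
  have n2: "\<not> fst p \<subseteq> S" if "p \<in> X2" for p
    using sqb_block[OF X2 that] d by blast
  have n1: "\<not> fst p \<subseteq> T" if "p \<in> X1" for p
    using sqb_block[OF X1 that] d by blast
  have s1: "fst p \<subseteq> S" if "p \<in> X1" for p using sqb_block[OF X1 that] by blast
  have s2: "fst p \<subseteq> T" if "p \<in> X2" for p using sqb_block[OF X2 that] by blast
  have "{A\<in>fst ` (X1 \<union> X2). A \<subseteq> S} = fst ` X1" using n2 s1 by blast
  moreover have "\<Union>(fst ` X1) = S" using sqbD(1)[OF X1] by (auto simp: partition_on_def)
  ultimately show "S = \<Union> {A\<in>fst ` (X1 \<union> X2). A \<subseteq> S}" by simp
  show "{p\<in>X1 \<union> X2. fst p \<subseteq> S} = X1" using n2 s1 by blast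
  show "{p\<in>X1 \<union> X2. fst p \<subseteq> T} = X2" using n1 s2 by blast
qed

definition sqdb :: "nat set \<Rightarrow> nat set \<Rightarrow> (nat set \<times> 'x) set \<Rightarrow> ((nat set \<times> 'x) set \<times> (nat set \<times> 'x) set) option" where
  "sqdb = (\<lambda>S T X. if S = \<Union> {A\<in>fst ` X. A \<subseteq> S}
              then Some ({p\<in>X. fst p \<subseteq> S}, {p\<in>X. fst p \<subseteq> T}) else None)"

lemma sq_comult_sqdb: "sq_comult qs = lin_comult (sq_basis qs) sqdb"
  unfolding sq_comult_def sqdb_def ..

lemma sq_char:
  assumes d: "S \<inter> T = {}" and X: "X \<in> sq_basis qs (S \<union> T)"
  shows "sqdb S T X = Some (X1, X2) \<longleftrightarrow> X1 \<in> sq_basis qs S \<and> X2 \<in> sq_basis qs T \<and> X = X1 \<union> X2"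
proof
  assume h: "sqdb S T X = Some (X1, X2)"
  then have cov: "S = \<Union> {A\<in>fst ` X. A \<subseteq> S}" and e: "X1 = {p\<in>X. fst p \<subseteq> S}" "X2 = {p\<in>X. fst p \<subseteq> T}"
    unfolding sqdb_def by (auto split: if_splits)
  show "X1 \<in> sq_basis qs S \<and> X2 \<in> sq_basis qs T \<and> X = X1 \<union> X2"
    using sq_split[OF d X cov] e by simp
next
  assume h: "X1 \<in> sq_basis qs S \<and> X2 \<in> sq_basis qs T \<and> X = X1 \<union> X2"
  then have X1: "X1 \<in> sq_basis qs S" and X2: "X2 \<in> sq_basis qs T" and e: "X = X1 \<union> X2" by auto
  show "sqdb S T X = Some (X1, X2)"
    unfolding sqdb_def e using sq_join[OF d X1 X2] by simp
qed

section \<open>Free commutativity\<close>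

lemma fin_sqb: "finite I \<Longrightarrow> finite (sq_basis qset I)"
  using beta_bij bij_betw_finite finite_hg by blast

lemma beta_into: "finite I \<Longrightarrow> E \<in> hg I \<Longrightarrow> beta I E \<in> sq_basis qset I"
  by (rule beta_in)

lemma species_iso_beta:
  "species_iso hg hg_relabel (sq_basis qset) (sq_relabel qmap) (push hg beta :: _ \<Rightarrow> (_ \<Rightarrow> 'k::field) \<Rightarrow> _)"
proof (rule species_iso_push)
  show "\<And>I. finite I \<Longrightarrow> finite (hg I)" by (rule finite_hg)
  show "\<And>I. finite I \<Longrightarrow> bij_betw (beta I) (hg I) (sq_basis qset I)" by (rule beta_bij)
  show "\<And>I J \<sigma> b. finite I \<Longrightarrow> bij_betw \<sigma> I J \<Longrightarrow> b \<in> hg I \<Longrightarrow> hg_relabel \<sigma> b \<in> hg J"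
    by (rule hg_relabel_hg)
  show "\<And>I J \<sigma> b. finite I \<Longrightarrow> bij_betw \<sigma> I J \<Longrightarrow> b \<in> hg I \<Longrightarrow> beta J (hg_relabel \<sigma> b) = sq_relabel qmap \<sigma> (beta I b)"
    by (rule beta_relabel)
qed

lemma monoid_beta:
  "monoid_compat hg hg_mult (sq_mult qset) (push hg beta :: _ \<Rightarrow> (_ \<Rightarrow> 'k::field) \<Rightarrow> _)"
  unfolding monoid_compat_def hg_mult_def sq_mult_def
proof (intro allI impI ballI)
  fix S T :: "nat set" and f g :: "nat set set \<Rightarrow> 'k"
  assume h: "finite S \<and> finite T \<and> S \<inter> T = {}"
  then have S: "finite S" and T: "finite T" and d: "S \<inter> T = {}" by auto
  show "push hg beta (S \<union> T) (lin_mult hg (\<union>) S T f g) =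
       lin_mult (sq_basis qset) (\<union>) S T (push hg beta S f) (push hg beta T g)"
  proof (rule push_mult)
    show "finite (hg S)" "finite (hg T)" "finite (hg (S \<union> T))" using S T by (simp_all add: finite_hg)
    show "finite (sq_basis qset S)" "finite (sq_basis qset T)" using S T by (simp_all add: fin_sqb)
    show "\<And>b. b \<in> hg S \<Longrightarrow> beta S b \<in> sq_basis qset S" using S by (rule beta_in)
    show "\<And>b. b \<in> hg T \<Longrightarrow> beta T b \<in> sq_basis qset T" using T by (rule beta_in)
    show "\<And>b1 b2. b1 \<in> hg S \<Longrightarrow> b2 \<in> hg T \<Longrightarrow> b1 \<union> b2 \<in> hg (S \<union> T)" by (rule hg_Un)
    show "\<And>b1 b2. b1 \<in> hg S \<Longrightarrow> b2 \<in> hg T \<Longrightarrow> beta (S \<union> T) (b1 \<union> b2) = beta S b1 \<union> beta T b2"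
      by (rule beta_Un[OF d])
  qed
qed

lemma free_comm: "hg_free_commutative TYPE('k::field)"
  unfolding hg_free_commutative_def
  using set_species_q qset_empty species_iso_beta monoid_beta by blast

section \<open>Free cocommutativity\<close>

lemma push_beta:
  assumes I: "finite I"
  shows "push hg beta I f c = (if c \<in> sq_basis qset I then f (inv_into (hg I) (beta I) c) else 0)"
  by (rule push_bij[where BB=hg and \<beta>=beta and CC="sq_basis qset", OF finite_hg[OF I] beta_bij[OF I]])

lemma tensor_push:
  fixes F G :: "(nat set set \<Rightarrow> 'k::comm_ring_1) \<Rightarrow> (nat set set \<Rightarrow> 'k)"
  assumes S: "finite S" and T: "finite T"
  shows "tensor_map hg S T (\<lambda>f. push hg beta S (F f)) (\<lambda>f. push hg beta T (G f)) M (X1, X2)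
    = (if X1 \<in> sq_basis qset S \<and> X2 \<in> sq_basis qset T
       then tensor_map hg S T F G M (inv_into (hg S) (beta S) X1, inv_into (hg T) (beta T) X2) else 0)"
  unfolding tensor_map_def
  by (cases "X1 \<in> sq_basis qset S"; cases "X2 \<in> sq_basis qset T") (simp_all add: push_beta[OF S] push_beta[OF T])

lemma comult_push:
  fixes \<phi> :: "nat set set \<Rightarrow> 'k::comm_ring_1"
  assumes S: "finite S" and T: "finite T" and d: "S \<inter> T = {}"
  shows "sq_comult qset S T (push hg beta (S \<union> T) \<phi>) (X1, X2)
    = (if X1 \<in> sq_basis qset S \<and> X2 \<in> sq_basis qset T
       then dual_comult hg hg_mult S T \<phi> (inv_into (hg S) (beta S) X1, inv_into (hg T) (beta T) X2) else 0)"
proof -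
  have U: "finite (S \<union> T)" using S T by simp
  have L: "sq_comult qset S T (push hg beta (S \<union> T) \<phi>) (X1, X2)
     = (\<Sum>X\<in>sq_basis qset (S \<union> T). if X1 \<in> sq_basis qset S \<and> X2 \<in> sq_basis qset T \<and> X = X1 \<union> X2
          then push hg beta (S \<union> T) \<phi> X else 0)"
    unfolding sq_comult_sqdb lin_comult_def
    by (rule sum.cong[OF refl]) (simp add: sq_char[OF d])
  show ?thesis
  proof (cases "X1 \<in> sq_basis qset S \<and> X2 \<in> sq_basis qset T")
    case False
    then have "(\<Sum>X\<in>sq_basis qset (S \<union> T). if X1 \<in> sq_basis qset S \<and> X2 \<in> sq_basis qset T \<and> X = X1 \<union> X2
          then push hg beta (S \<union> T) \<phi> X else 0) = 0" by (intro sum.neutral) auto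
    then show ?thesis unfolding L using False by (simp only: if_False)
  next
    case True
    let ?E1 = "inv_into (hg S) (beta S) X1" and ?E2 = "inv_into (hg T) (beta T) X2"
    have E1a: "?E1 \<in> hg S" using True beta_bij[OF S] by (auto simp: bij_betw_def intro: inv_into_into)
    have E1b: "beta S ?E1 = X1" using True beta_bij[OF S] by (simp add: bij_betw_def f_inv_into_f)
    have E2a: "?E2 \<in> hg T" using True beta_bij[OF T] by (auto simp: bij_betw_def intro: inv_into_into)
    have E2b: "beta T ?E2 = X2" using True beta_bij[OF T] by (simp add: bij_betw_def f_inv_into_f)
    note E1 = E1a E1b and E2 = E2a E2b
    have E12: "?E1 \<union> ?E2 \<in> hg (S \<union> T)" by (rule hg_Un[OF E1(1) E2(1)])
    have bU: "beta (S \<union> T) (?E1 \<union> ?E2) = X1 \<union> X2" using beta_Un[OF d E1(1) E2(1)] E1 E2 by simp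
    have XU: "X1 \<union> X2 \<in> sq_basis qset (S \<union> T)" using beta_in[OF U E12] bU by simp
    have "sq_comult qset S T (push hg beta (S \<union> T) \<phi>) (X1, X2) = push hg beta (S \<union> T) \<phi> (X1 \<union> X2)"
      unfolding L using True XU fin_sqb[OF U] by (simp add: sum.delta')
    also have "\<dots> = \<phi> (?E1 \<union> ?E2)"
      using push_beta[OF U, of \<phi> "X1 \<union> X2"] XU
        bij_betw_inv_into_left[OF beta_bij[OF U] E12] bU by simp
    also have "\<dots> = dual_comult hg hg_mult S T \<phi> (?E1, ?E2)"
      unfolding dual_comult_def using E1(1) E2(1) E12 U
      by (simp add: hg_mult_delta[OF S T] finite_hg if_distrib sum.delta' cong: if_cong)
    finally show ?thesis using True by simp
  qed
qed

lemma comonoid_beta: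
  "comonoid_compat hg hg_comult (sq_comult qset) (\<lambda>I f. push hg beta I (sdPhi I f) :: _ \<Rightarrow> 'k::field)"
  unfolding comonoid_compat_def
proof (intro allI impI ballI ext)
  fix S T :: "nat set" and h :: "nat set set \<Rightarrow> 'k" and p :: "(nat set \<times> nat) set \<times> (nat set \<times> nat) set"
  assume h: "finite S \<and> finite T \<and> S \<inter> T = {}"
  then have S: "finite S" and T: "finite T" and d: "S \<inter> T = {}" by auto
  obtain X1 X2 where p: "p = (X1, X2)" by (cases p)
  show "sq_comult qset S T (push hg beta (S \<union> T) (sdPhi (S \<union> T) h)) p =
        tensor_map hg S T (\<lambda>f. push hg beta S (sdPhi S f)) (\<lambda>f. push hg beta T (sdPhi T f)) (hg_comult S T h) p"
    unfolding p comult_push[OF S T d] tensor_push[OF S T] sd_comonoid_pt[OF S T d] ..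
qed

lemma free_cocomm: "hg_free_cocommutative TYPE('k::field)"
proof -
  have "species_iso hg hg_relabel (sq_basis qset) (sq_relabel qmap)
      (\<lambda>I f. push hg beta I (sdPhi I f) :: _ \<Rightarrow> 'k)"
    by (rule species_iso_comp[OF species_iso_sd species_iso_beta])
  then show ?thesis
    unfolding hg_free_cocommutative_def
    using set_species_q qset_empty comonoid_beta by blast
qed

theorem mainTheorem15:
  shows "hg_free_commutative TYPE('k::field_char_0) \<and>
         hg_free_cocommutative TYPE('k::field_char_0) \<and>
         hg_self_dual TYPE('k::field_char_0)"
  using free_comm free_cocomm self_dual by blast

end
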